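(* Let $(F,\tilde F,F_0)$ be a monoidal functor from a monoidal category to a $K$-linear tensor category and let $\tilde F+\sum_{k=1}^nF^{(k)}\epsilon^k$ (with $F_0$ undeformed) be an $n$-th order proper deformation of $F$. Then each $F^{(k)}$ lies in $C^2(F)$, and the obstruction $\omega_{A,B,C}=\sum_{l+m=n+1,\ 1\le l,m\le n}\lceil (F^{(m)}_{A,B}\otimes F(C))\circ F^{(l)}_{A\otimes B,C}\rceil-\sum_{p+q=n+1,\ 1\le p,q\le n}\lceil (F(A)\otimes F^{(q)}_{B,C})\circ F^{(p)}_{A,B\otimes C}\rceil$ to extending it to an $(n+1)$-st order proper deformation is a 3-cocycle of the proper deformation complex $C^\bullet(F)$.
   Context: A monoidal functor $(F,\tilde F,F_0)$: natural iso $\tilde F_{A,B}:F(A\otimes B)\to F(A)\otimes F(B)$ and iso $F_0:F(I)\to I$ satisfying hexagon and unit squares. $X^n(F)=\mathrm{Nat}(F\circ{}^n\otimes,\ \otimes^n\circ F^n)$ (left/right-parenthesized $n$-fold products), $\lceil f\rceil$ = $f$ padded with canonical coherence isomorphisms (associators, unit constraints, $\tilde F$, $F_0$, inverses) to have source $F$(left-parenthesized product) and target the right-parenthesized product of the $F(A_i)$; coboundary $(\delta\varphi)_{A_1,\dots,A_{n+1}}=\lceil F(A_1)\otimes\varphi_{A_2,\dots}\rceil+\sum_{i=1}^n(-1)^i\lceil\varphi_{\dots,A_i\otimes A_{i+1},\dots}\rceil+(-1)^{n+1}\lceil\varphi_{A_1,\dots,A_n}\otimes F(A_{n+1})\rceil$.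 Proper complex: $C^n(F)=\{\varphi\in X^n(F):\varphi_{A_1,\dots,A_n}=0\text{ whenever some }A_i=I\}$. An $n$-th order proper deformation of $F$ is a monoidal functor $(F,\tilde F+\sum_{k=1}^nF^{(k)}\epsilon^k,F_0)$, $F^{(k)}\in X^2(F)$, same underlying functor and same $F_0$, into the trivial deformation of the target over $K[\epsilon]/\langle\epsilon^{n+1}\rangle$ (hom-spaces tensored, undeformed structure maps). Extension to order $n+1$ by a term $F^{(n+1)}\epsilon^{n+1}$ is possible precisely when $\delta F^{(n+1)}=\omega$ is solvable. *)

theory Defs
  imports Main
begin

record ('o, 'm) cat =
  cObj  :: "'o set"
  cArr  :: "'m set"
  cDom  :: "'m \<Rightarrow> 'o"
  cCod  :: "'m \<Rightarrow> 'o"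
  cId   :: "'o \<Rightarrow> 'm"
  cComp :: "'m \<Rightarrow> 'm \<Rightarrow> 'm"   (* cComp g f = g o f *)

record ('o, 'm) moncat = "('o, 'm) cat" +
  mTo    :: "'o \<Rightarrow> 'o \<Rightarrow> 'o"
  mTm    :: "'m \<Rightarrow> 'm \<Rightarrow> 'm"
  mUnit  :: "'o"
  mAssoc :: "'o \<Rightarrow> 'o \<Rightarrow> 'o \<Rightarrow> 'm"    (* (X*Y)*Z -> X*(Y*Z) *)
  mLunit :: "'o \<Rightarrow> 'm"
  mRunit :: "'o \<Rightarrow> 'm"

record ('k, 'o, 'm) linmoncat = "('o, 'm) moncat" +
  lZero :: "'o \<Rightarrow> 'o \<Rightarrow> 'm"
  lAdd  :: "'m \<Rightarrow> 'm \<Rightarrow> 'm"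
  lSmul :: "'k \<Rightarrow> 'm \<Rightarrow> 'm"

definition Hom where
  "Hom C X Y = {f \<in> cArr C. cDom C f = X \<and> cCod C f = Y}"

definition is_cat where
  "is_cat C \<longleftrightarrow>
     (\<forall>X\<in>cObj C. cId C X \<in> Hom C X X) \<and>
     (\<forall>f\<in>cArr C. cDom C f \<in> cObj C \<and> cCod C f \<in> cObj C) \<and>
     (\<forall>f\<in>cArr C. \<forall>g\<in>cArr C. cCod C f = cDom C g \<longrightarrow>
         cComp C g f \<in> Hom C (cDom C f) (cCod C g)) \<and>
     (\<forall>f\<in>cArr C. cComp C f (cId C (cDom C f)) = f \<and> cComp C (cId C (cCod C f)) f = f) \<and>
     (\<forall>f\<in>cArr C. \<forall>g\<in>cArr C. \<forall>h\<in>cArr C. cCod C f = cDom C g \<and> cCod C g = cDom C h \<longrightarrow>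
         cComp C h (cComp C g f) = cComp C (cComp C h g) f)"

definition iso where
  "iso C f \<longleftrightarrow> f \<in> cArr C \<and>
     (\<exists>g\<in>Hom C (cCod C f) (cDom C f).
        cComp C g f = cId C (cDom C f) \<and> cComp C f g = cId C (cCod C f))"

definition is_moncat where
  "is_moncat C \<longleftrightarrow> is_cat C \<and>
     mUnit C \<in> cObj C \<and>
     (\<forall>X\<in>cObj C. \<forall>Y\<in>cObj C. mTo C X Y \<in> cObj C) \<and>
     (\<forall>f\<in>cArr C. \<forall>g\<in>cArr C.
        mTm C f g \<in> Hom C (mTo C (cDom C f) (cDom C g)) (mTo C (cCod C f) (cCod C g))) \<and>
     (\<forall>X\<in>cObj C. \<forall>Y\<in>cObj C. mTm C (cId C X) (cId C Y) = cId C (mTo C X Y)) \<and>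
     (\<forall>f\<in>cArr C. \<forall>g\<in>cArr C. \<forall>f'\<in>cArr C. \<forall>g'\<in>cArr C.
        cCod C f = cDom C g \<and> cCod C f' = cDom C g' \<longrightarrow>
        mTm C (cComp C g f) (cComp C g' f') = cComp C (mTm C g g') (mTm C f f')) \<and>
     (\<forall>X\<in>cObj C. \<forall>Y\<in>cObj C. \<forall>Z\<in>cObj C.
        mAssoc C X Y Z \<in> Hom C (mTo C (mTo C X Y) Z) (mTo C X (mTo C Y Z)) \<and>
        iso C (mAssoc C X Y Z)) \<and>
     (\<forall>X\<in>cObj C. mLunit C X \<in> Hom C (mTo C (mUnit C) X) X \<and> iso C (mLunit C X)) \<and>
     (\<forall>X\<in>cObj C. mRunit C X \<in> Hom C (mTo C X (mUnit C)) X \<and> iso C (mRunit C X)) \<and>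
     (\<forall>f\<in>cArr C. \<forall>g\<in>cArr C. \<forall>h\<in>cArr C.
        cComp C (mAssoc C (cCod C f) (cCod C g) (cCod C h)) (mTm C (mTm C f g) h)
        = cComp C (mTm C f (mTm C g h)) (mAssoc C (cDom C f) (cDom C g) (cDom C h))) \<and>
     (\<forall>f\<in>cArr C. cComp C (mLunit C (cCod C f)) (mTm C (cId C (mUnit C)) f)
                   = cComp C f (mLunit C (cDom C f))) \<and>
     (\<forall>f\<in>cArr C. cComp C (mRunit C (cCod C f)) (mTm C f (cId C (mUnit C)))
                   = cComp C f (mRunit C (cDom C f))) \<and>
     (\<forall>W\<in>cObj C. \<forall>X\<in>cObj C. \<forall>Y\<in>cObj C. \<forall>Z\<in>cObj C.
        cComp C (mTm C (cId C W) (mAssoc C X Y Z))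
          (cComp C (mAssoc C W (mTo C X Y) Z) (mTm C (mAssoc C W X Y) (cId C Z)))
        = cComp C (mAssoc C W X (mTo C Y Z)) (mAssoc C (mTo C W X) Y Z)) \<and>
     (\<forall>X\<in>cObj C. \<forall>Y\<in>cObj C.
        cComp C (mTm C (cId C X) (mLunit C Y)) (mAssoc C X (mUnit C) Y)
        = mTm C (mRunit C X) (cId C Y))"

definition is_linmoncat where
  "is_linmoncat D \<longleftrightarrow> is_moncat D \<and>
     (\<forall>X\<in>cObj D. \<forall>Y\<in>cObj D.
        lZero D X Y \<in> Hom D X Y \<and>
        (\<forall>f\<in>Hom D X Y. \<forall>g\<in>Hom D X Y. lAdd D f g \<in> Hom D X Y) \<and>
        (\<forall>c. \<forall>f\<in>Hom D X Y. lSmul D c f \<in> Hom D X Y) \<and>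
        (\<forall>f\<in>Hom D X Y. \<forall>g\<in>Hom D X Y. \<forall>h\<in>Hom D X Y.
            lAdd D (lAdd D f g) h = lAdd D f (lAdd D g h)) \<and>
        (\<forall>f\<in>Hom D X Y. \<forall>g\<in>Hom D X Y. lAdd D f g = lAdd D g f) \<and>
        (\<forall>f\<in>Hom D X Y. lAdd D (lZero D X Y) f = f) \<and>
        (\<forall>f\<in>Hom D X Y. lAdd D f (lSmul D (-1) f) = lZero D X Y) \<and>
        (\<forall>c. \<forall>f\<in>Hom D X Y. \<forall>g\<in>Hom D X Y.
            lSmul D c (lAdd D f g) = lAdd D (lSmul D c f) (lSmul D c g)) \<and>
        (\<forall>c d. \<forall>f\<in>Hom D X Y. lSmul D (c + d) f = lAdd D (lSmul D c f) (lSmul D d f)) \<and>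
        (\<forall>c d. \<forall>f\<in>Hom D X Y. lSmul D (c * d) f = lSmul D c (lSmul D d f)) \<and>
        (\<forall>f\<in>Hom D X Y. lSmul D 1 f = f)) \<and>
     (\<forall>X\<in>cObj D. \<forall>Y\<in>cObj D. \<forall>Z\<in>cObj D.
        (\<forall>g\<in>Hom D Y Z. \<forall>f\<in>Hom D X Y. \<forall>f'\<in>Hom D X Y.
            cComp D g (lAdd D f f') = lAdd D (cComp D g f) (cComp D g f')) \<and>
        (\<forall>g\<in>Hom D Y Z. \<forall>g'\<in>Hom D Y Z. \<forall>f\<in>Hom D X Y.
            cComp D (lAdd D g g') f = lAdd D (cComp D g f) (cComp D g' f)) \<and>
        (\<forall>c. \<forall>g\<in>Hom D Y Z. \<forall>f\<in>Hom D X Y.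
            cComp D g (lSmul D c f) = lSmul D c (cComp D g f) \<and>
            cComp D (lSmul D c g) f = lSmul D c (cComp D g f))) \<and>
     (\<forall>X\<in>cObj D. \<forall>Y\<in>cObj D. \<forall>X'\<in>cObj D. \<forall>Y'\<in>cObj D.
        (\<forall>f\<in>Hom D X Y. \<forall>f'\<in>Hom D X Y. \<forall>g\<in>Hom D X' Y'.
            mTm D (lAdd D f f') g = lAdd D (mTm D f g) (mTm D f' g)) \<and>
        (\<forall>f\<in>Hom D X Y. \<forall>g\<in>Hom D X' Y'. \<forall>g'\<in>Hom D X' Y'.
            mTm D f (lAdd D g g') = lAdd D (mTm D f g) (mTm D f g')) \<and>
        (\<forall>c. \<forall>f\<in>Hom D X Y. \<forall>g\<in>Hom D X' Y'.
            mTm D (lSmul D c f) g = lSmul D c (mTm D f g) \<and>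
            mTm D f (lSmul D c g) = lSmul D c (mTm D f g)))"

fun lsum where
  "lsum D X Y f 0 = lZero D X Y"
| "lsum D X Y f (Suc m) = lAdd D (lsum D X Y f m) (f m)"

definition lneg where
  "lneg D f = lSmul D (-1) f"

definition is_functor where
  "is_functor C D FO FM \<longleftrightarrow>
     (\<forall>X\<in>cObj C. FO X \<in> cObj D) \<and>
     (\<forall>f\<in>cArr C. FM f \<in> Hom D (FO (cDom C f)) (FO (cCod C f))) \<and>
     (\<forall>X\<in>cObj C. FM (cId C X) = cId D (FO X)) \<and>
     (\<forall>f\<in>cArr C. \<forall>g\<in>cArr C. cCod C f = cDom C g \<longrightarrow>
        FM (cComp C g f) = cComp D (FM g) (FM f))"

definition is_monfun where
  "is_monfun C D FO FM Ft F0 \<longleftrightarrow> is_moncat C \<and> is_moncat D \<and> is_functor C D FO FM \<and>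
     (\<forall>X\<in>cObj C. \<forall>Y\<in>cObj C.
        Ft X Y \<in> Hom D (FO (mTo C X Y)) (mTo D (FO X) (FO Y)) \<and> iso D (Ft X Y)) \<and>
     (\<forall>f\<in>cArr C. \<forall>g\<in>cArr C.
        cComp D (Ft (cCod C f) (cCod C g)) (FM (mTm C f g))
        = cComp D (mTm D (FM f) (FM g)) (Ft (cDom C f) (cDom C g))) \<and>
     F0 \<in> Hom D (FO (mUnit C)) (mUnit D) \<and> iso D F0 \<and>
     (\<forall>X\<in>cObj C. \<forall>Y\<in>cObj C. \<forall>Z\<in>cObj C.
        cComp D (mAssoc D (FO X) (FO Y) (FO Z))
          (cComp D (mTm D (Ft X Y) (cId D (FO Z))) (Ft (mTo C X Y) Z))
        = cComp D (mTm D (cId D (FO X)) (Ft Y Z))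
            (cComp D (Ft X (mTo C Y Z)) (FM (mAssoc C X Y Z)))) \<and>
     (\<forall>X\<in>cObj C. FM (mLunit C X)
        = cComp D (mLunit D (FO X)) (cComp D (mTm D F0 (cId D (FO X))) (Ft (mUnit C) X))) \<and>
     (\<forall>X\<in>cObj C. FM (mRunit C X)
        = cComp D (mRunit D (FO X)) (cComp D (mTm D (cId D (FO X)) F0) (Ft X (mUnit C))))"

section \<open>Trivial deformation over K[eps]/(eps^(n+1))\<close>

text \<open>A morphism of the deformed category is a coefficient sequence p with p k in Hom X Y
  for k <= n and p k = 0 for k > n (it stands for sum_k p k eps^k).\<close>

definition pconst where
  "pconst D (n::nat) f = (\<lambda>k::nat. if k = 0 then f else lZero D (cDom D f) (cCod D f))"

definition tdef where
  "tdef D n = \<lparr>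
     cObj = cObj D,
     cArr = {p. p 0 \<in> cArr D \<and>
                (\<forall>k\<le>n. p k \<in> Hom D (cDom D (p 0)) (cCod D (p 0))) \<and>
                (\<forall>k>n. p k = lZero D (cDom D (p 0)) (cCod D (p 0)))},
     cDom = (\<lambda>p. cDom D (p 0)),
     cCod = (\<lambda>p. cCod D (p 0)),
     cId = (\<lambda>X. pconst D n (cId D X)),
     cComp = (\<lambda>q p k. if k \<le> n
               then lsum D (cDom D (p 0)) (cCod D (q 0)) (\<lambda>i. cComp D (q i) (p (k - i))) (Suc k)
               else lZero D (cDom D (p 0)) (cCod D (q 0))),
     mTo = mTo D,
     mTm = (\<lambda>p q k. if k \<le> n
               then lsum D (mTo D (cDom D (p 0)) (cDom D (q 0))) (mTo D (cCod D (p 0)) (cCod D (q 0)))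
                      (\<lambda>i. mTm D (p i) (q (k - i))) (Suc k)
               else lZero D (mTo D (cDom D (p 0)) (cDom D (q 0))) (mTo D (cCod D (p 0)) (cCod D (q 0)))),
     mUnit = mUnit D,
     mAssoc = (\<lambda>X Y Z. pconst D n (mAssoc D X Y Z)),
     mLunit = (\<lambda>X. pconst D n (mLunit D X)),
     mRunit = (\<lambda>X. pconst D n (mRunit D X)),
     lZero = (\<lambda>X Y (k::nat). lZero D X Y),
     lAdd = (\<lambda>p q (k::nat). lAdd D (p k) (q k)),
     lSmul = (\<lambda>c p (k::nat). lSmul D c (p k)) \<rparr>"

definition inX2 where
  "inX2 C D FO FM \<phi> \<longleftrightarrow>
     (\<forall>A\<in>cObj C. \<forall>B\<in>cObj C. \<phi> A B \<in> Hom D (FO (mTo C A B)) (mTo D (FO A) (FO B))) \<and>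
     (\<forall>f\<in>cArr C. \<forall>g\<in>cArr C.
        cComp D (\<phi> (cCod C f) (cCod C g)) (FM (mTm C f g))
        = cComp D (mTm D (FM f) (FM g)) (\<phi> (cDom C f) (cDom C g)))"

definition inC2 where
  "inC2 C D FO FM \<phi> \<longleftrightarrow> inX2 C D FO FM \<phi> \<and>
     (\<forall>A\<in>cObj C. \<forall>B\<in>cObj C. (A = mUnit C \<or> B = mUnit C) \<longrightarrow>
        \<phi> A B = lZero D (FO (mTo C A B)) (mTo D (FO A) (FO B)))"

definition inX3 where
  "inX3 C D FO FM \<phi> \<longleftrightarrow>
     (\<forall>A\<in>cObj C. \<forall>B\<in>cObj C. \<forall>E\<in>cObj C.
        \<phi> A B E \<in> Hom D (FO (mTo C (mTo C A B) E)) (mTo D (FO A) (mTo D (FO B) (FO E)))) \<and>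
     (\<forall>f\<in>cArr C. \<forall>g\<in>cArr C. \<forall>h\<in>cArr C.
        cComp D (\<phi> (cCod C f) (cCod C g) (cCod C h)) (FM (mTm C (mTm C f g) h))
        = cComp D (mTm D (FM f) (mTm D (FM g) (FM h))) (\<phi> (cDom C f) (cDom C g) (cDom C h)))"

definition inC3 where
  "inC3 C D FO FM \<phi> \<longleftrightarrow> inX3 C D FO FM \<phi> \<and>
     (\<forall>A\<in>cObj C. \<forall>B\<in>cObj C. \<forall>E\<in>cObj C. (A = mUnit C \<or> B = mUnit C \<or> E = mUnit C) \<longrightarrow>
        \<phi> A B E = lZero D (FO (mTo C (mTo C A B) E)) (mTo D (FO A) (mTo D (FO B) (FO E))))"

text \<open>Coboundary of a 3-cochain; each term padded with canonical coherence maps so that it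
  goes F(((A*B)*E)*G) -> F A * (F B * (F E * F G)).\<close>

definition delta3 where
  "delta3 C D FO FM Ft \<phi> A B E G =
     (let FA = FO A; FB = FO B; FE = FO E; FG = FO G;
          t1 = cComp D (mTm D (cId D FA) (\<phi> B E G))
                 (cComp D (Ft A (mTo C (mTo C B E) G))
                   (cComp D (FM (mAssoc C A (mTo C B E) G))
                     (FM (mTm C (mAssoc C A B E) (cId C G)))));
          t2 = cComp D (mAssoc D FA FB (mTo D FE FG))
                 (cComp D (mTm D (Ft A B) (cId D (mTo D FE FG))) (\<phi> (mTo C A B) E G));
          t3 = cComp D (mTm D (cId D FA)
                          (cComp D (mAssoc D FB FE FG) (mTm D (Ft B E) (cId D FG))))
                 (cComp D (\<phi> A (mTo C B E) G) (FM (mTm C (mAssoc C A B E) (cId C G))));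
          t4 = cComp D (mTm D (cId D FA) (mTm D (cId D FB) (Ft E G)))
                 (cComp D (\<phi> A B (mTo C E G)) (FM (mAssoc C (mTo C A B) E G)));
          t5 = cComp D (mTm D (cId D FA) (mAssoc D FB FE FG))
                 (cComp D (mAssoc D FA (mTo D FB FE) FG)
                   (cComp D (mTm D (\<phi> A B E) (cId D FG)) (Ft (mTo C (mTo C A B) E) G)))
      in lAdd D (lAdd D (lAdd D (lAdd D t1 (lneg D t2)) t3) (lneg D t4)) t5)"

definition is_3cocycle where
  "is_3cocycle C D FO FM Ft \<phi> \<longleftrightarrow> inC3 C D FO FM \<phi> \<and>
     (\<forall>A\<in>cObj C. \<forall>B\<in>cObj C. \<forall>E\<in>cObj C. \<forall>G\<in>cObj C.
        delta3 C D FO FM Ft \<phi> A B E G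
        = lZero D (FO (mTo C (mTo C (mTo C A B) E) G))
                  (mTo D (FO A) (mTo D (FO B) (mTo D (FO E) (FO G)))))"

definition deformed_Ft where
  "deformed_Ft C D FO Ft (n::nat) Fk = (\<lambda>A B (k::nat).
     if k = 0 then Ft A B
     else if k \<le> n then Fk k A B
     else lZero D (FO (mTo C A B)) (mTo D (FO A) (FO B)))"

definition is_proper_deformation where
  "is_proper_deformation C D FO FM Ft F0 n Fk \<longleftrightarrow>
     (\<forall>k\<in>{1..n}. inX2 C D FO FM (Fk k)) \<and>
     is_monfun C (tdef D n) FO (\<lambda>f. pconst D n (FM f)) (deformed_Ft C D FO Ft n Fk) (pconst D n F0)"

definition obstruction where
  "obstruction C D FO FM n Fk = (\<lambda>A B E.
     (let X = FO (mTo C (mTo C A B) E); Y = mTo D (FO A) (mTo D (FO B) (FO E)) in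
      lAdd D
        (lsum D X Y (\<lambda>i. let l = i + 1; m = n - i in
            cComp D (mAssoc D (FO A) (FO B) (FO E))
              (cComp D (mTm D (Fk m A B) (cId D (FO E))) (Fk l (mTo C A B) E))) n)
        (lneg D (lsum D X Y (\<lambda>i. let p = i + 1; q = n - i in
            cComp D (mTm D (cId D (FO A)) (Fk q B E))
              (cComp D (Fk p A (mTo C B E)) (FM (mAssoc C A B E)))) n))))"

end

theory Submission
  imports Defs
begin


locale LD =
  fixes D :: "('k::field, 'o, 'm, 'z) linmoncat_scheme"
  assumes lD: "is_linmoncat D"
begin

abbreviation "Ob \<equiv> cObj D"
abbreviation "H \<equiv> Hom D"
abbreviation "cmp \<equiv> cComp D"
abbreviation "tm \<equiv> mTm D"
abbreviation "to \<equiv> mTo D"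
abbreviation "idd \<equiv> cId D"
abbreviation "al \<equiv> mAssoc D"
abbreviation "add \<equiv> lAdd D"
abbreviation "zr \<equiv> lZero D"
abbreviation "ng \<equiv> lneg D"

lemma mD: "is_moncat D" using lD unfolding is_linmoncat_def by (rule conjunct1)
lemma cD: "is_cat D" using mD unfolding is_moncat_def by (rule conjunct1)

lemma HomD: "f \<in> H X Y \<longleftrightarrow> f \<in> cArr D \<and> cDom D f = X \<and> cCod D f = Y"
  by (simp add: Hom_def)

lemma hom_objs: "f \<in> H X Y \<Longrightarrow> X \<in> Ob \<and> Y \<in> Ob"
  using cD[unfolded is_cat_def, THEN conjunct2, THEN conjunct1] unfolding Hom_def by auto

lemma id_hom[intro,simp]: "X \<in> Ob \<Longrightarrow> idd X \<in> H X X"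
  using cD[unfolded is_cat_def, THEN conjunct1] by blast

lemma comp_hom[intro]: "f \<in> H X Y \<Longrightarrow> g \<in> H Y Z \<Longrightarrow> cmp g f \<in> H X Z"
  using cD[unfolded is_cat_def, THEN conjunct2, THEN conjunct2, THEN conjunct1] unfolding Hom_def by auto

lemma comp_assoc: "f \<in> H W X \<Longrightarrow> g \<in> H X Y \<Longrightarrow> h \<in> H Y Z \<Longrightarrow>
   cmp h (cmp g f) = cmp (cmp h g) f"
  using cD[unfolded is_cat_def, THEN conjunct2, THEN conjunct2, THEN conjunct2, THEN conjunct2] unfolding Hom_def by auto

lemma id_left[simp]: "f \<in> H X Y \<Longrightarrow> cmp (idd Y) f = f"
  using cD[unfolded is_cat_def, THEN conjunct2, THEN conjunct2, THEN conjunct2, THEN conjunct1] unfolding Hom_def by auto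
lemma id_right[simp]: "f \<in> H X Y \<Longrightarrow> cmp f (idd X) = f"
  using cD[unfolded is_cat_def, THEN conjunct2, THEN conjunct2, THEN conjunct2, THEN conjunct1] unfolding Hom_def by auto

lemma id_id[simp]: "X \<in> Ob \<Longrightarrow> cmp (idd X) (idd X) = idd X"
  using id_left id_hom by blast

lemma unit_ob[intro,simp]: "mUnit D \<in> Ob" using mD[unfolded is_moncat_def, THEN conjunct2, THEN conjunct1] .
lemma to_ob[intro,simp]: "X \<in> Ob \<Longrightarrow> Y \<in> Ob \<Longrightarrow> to X Y \<in> Ob"
  using mD[unfolded is_moncat_def, THEN conjunct2, THEN conjunct2, THEN conjunct1] by blast

lemma tm_hom[intro]: "f \<in> H X Y \<Longrightarrow> g \<in> H X' Y' \<Longrightarrow> tm f g \<in> H (to X X') (to Y Y')"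
  using mD[unfolded is_moncat_def, THEN conjunct2, THEN conjunct2, THEN conjunct2, THEN conjunct1] unfolding Hom_def by auto

lemma tm_id: "X \<in> Ob \<Longrightarrow> Y \<in> Ob \<Longrightarrow> tm (idd X) (idd Y) = idd (to X Y)"
  using mD[unfolded is_moncat_def, THEN conjunct2, THEN conjunct2, THEN conjunct2, THEN conjunct2, THEN conjunct1] by blast

lemma interchange: "f \<in> H X Y \<Longrightarrow> g \<in> H Y Z \<Longrightarrow> f' \<in> H X' Y' \<Longrightarrow> g' \<in> H Y' Z' \<Longrightarrow>
   tm (cmp g f) (cmp g' f') = cmp (tm g g') (tm f f')"
  using mD[unfolded is_moncat_def, THEN conjunct2, THEN conjunct2, THEN conjunct2, THEN conjunct2, THEN conjunct2, THEN conjunct1] unfolding Hom_def by auto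

lemma al_hom[intro]: "X \<in> Ob \<Longrightarrow> Y \<in> Ob \<Longrightarrow> Z \<in> Ob \<Longrightarrow> al X Y Z \<in> H (to (to X Y) Z) (to X (to Y Z))"
  using mD[unfolded is_moncat_def, THEN conjunct2, THEN conjunct2, THEN conjunct2, THEN conjunct2, THEN conjunct2, THEN conjunct2, THEN conjunct1] by blast

lemma al_nat: "f \<in> H X X' \<Longrightarrow> g \<in> H Y Y' \<Longrightarrow> h \<in> H Z Z' \<Longrightarrow>
   cmp (al X' Y' Z') (tm (tm f g) h) = cmp (tm f (tm g h)) (al X Y Z)"
proof -
  assume a: "f \<in> H X X'" "g \<in> H Y Y'" "h \<in> H Z Z'"
  have "\<forall>f\<in>cArr D. \<forall>g\<in>cArr D. \<forall>h\<in>cArr D.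
        cmp (al (cCod D f) (cCod D g) (cCod D h)) (tm (tm f g) h)
        = cmp (tm f (tm g h)) (al (cDom D f) (cDom D g) (cDom D h))"
    using mD[unfolded is_moncat_def, THEN conjunct2, THEN conjunct2, THEN conjunct2, THEN conjunct2, THEN conjunct2, THEN conjunct2, THEN conjunct2, THEN conjunct2, THEN conjunct2, THEN conjunct1] .
  then show ?thesis using a unfolding Hom_def by auto
qed

lemma pentagon: "W \<in> Ob \<Longrightarrow> X \<in> Ob \<Longrightarrow> Y \<in> Ob \<Longrightarrow> Z \<in> Ob \<Longrightarrow>
        cmp (tm (idd W) (al X Y Z))
          (cmp (al W (to X Y) Z) (tm (al W X Y) (idd Z)))
        = cmp (al W X (to Y Z)) (al (to W X) Y Z)"
  using mD[unfolded is_moncat_def, THEN conjunct2, THEN conjunct2, THEN conjunct2, THEN conjunct2, THEN conjunct2, THEN conjunct2, THEN conjunct2, THEN conjunct2, THEN conjunct2, THEN conjunct2, THEN conjunct2, THEN conjunct2, THEN conjunct1] by blast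

lemma lunit_hom[intro]: "X \<in> Ob \<Longrightarrow> mLunit D X \<in> H (to (mUnit D) X) X"
  using mD[unfolded is_moncat_def, THEN conjunct2, THEN conjunct2, THEN conjunct2, THEN conjunct2, THEN conjunct2, THEN conjunct2, THEN conjunct2, THEN conjunct1] by blast
lemma runit_hom[intro]: "X \<in> Ob \<Longrightarrow> mRunit D X \<in> H (to X (mUnit D)) X"
  using mD[unfolded is_moncat_def, THEN conjunct2, THEN conjunct2, THEN conjunct2, THEN conjunct2, THEN conjunct2, THEN conjunct2, THEN conjunct2, THEN conjunct2, THEN conjunct1] by blast
lemma lunit_iso: "X \<in> Ob \<Longrightarrow> iso D (mLunit D X)"
  using mD[unfolded is_moncat_def, THEN conjunct2, THEN conjunct2, THEN conjunct2, THEN conjunct2, THEN conjunct2, THEN conjunct2, THEN conjunct2, THEN conjunct1] by blast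
lemma runit_iso: "X \<in> Ob \<Longrightarrow> iso D (mRunit D X)"
  using mD[unfolded is_moncat_def, THEN conjunct2, THEN conjunct2, THEN conjunct2, THEN conjunct2, THEN conjunct2, THEN conjunct2, THEN conjunct2, THEN conjunct2, THEN conjunct1] by blast

section \<open>linear structure\<close>

lemma lin_hom: "X \<in> Ob \<Longrightarrow> Y \<in> Ob \<Longrightarrow>
        zr X Y \<in> H X Y \<and>
        (\<forall>f\<in>H X Y. \<forall>g\<in>H X Y. add f g \<in> H X Y) \<and>
        (\<forall>c. \<forall>f\<in>H X Y. lSmul D c f \<in> H X Y) \<and>
        (\<forall>f\<in>H X Y. \<forall>g\<in>H X Y. \<forall>h\<in>H X Y.
            add (add f g) h = add f (add g h)) \<and>
        (\<forall>f\<in>H X Y. \<forall>g\<in>H X Y. add f g = add g f) \<and>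
        (\<forall>f\<in>H X Y. add (zr X Y) f = f) \<and>
        (\<forall>f\<in>H X Y. add f (lSmul D (-1) f) = zr X Y) \<and>
        (\<forall>c. \<forall>f\<in>H X Y. \<forall>g\<in>H X Y.
            lSmul D c (add f g) = add (lSmul D c f) (lSmul D c g)) \<and>
        (\<forall>c d. \<forall>f\<in>H X Y. lSmul D (c + d) f = add (lSmul D c f) (lSmul D d f)) \<and>
        (\<forall>c d. \<forall>f\<in>H X Y. lSmul D (c * d) f = lSmul D c (lSmul D d f)) \<and>
        (\<forall>f\<in>H X Y. lSmul D 1 f = f)"
  by (insert lD[unfolded is_linmoncat_def, THEN conjunct2, THEN conjunct1], (drule bspec, assumption)+, assumption)

lemma lh1: "X \<in> Ob \<Longrightarrow> Y \<in> Ob \<Longrightarrow> zr X Y \<in> H X Y" using lin_hom[THEN conjunct1] .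
lemma lh2: "X \<in> Ob \<Longrightarrow> Y \<in> Ob \<Longrightarrow> (\<forall>f\<in>H X Y. \<forall>g\<in>H X Y. add f g \<in> H X Y)"
  using lin_hom[THEN conjunct2, THEN conjunct1] .
lemma lh3: "X \<in> Ob \<Longrightarrow> Y \<in> Ob \<Longrightarrow> (\<forall>c. \<forall>f\<in>H X Y. lSmul D c f \<in> H X Y)"
  using lin_hom[THEN conjunct2, THEN conjunct2, THEN conjunct1] .
lemma lh4: "X \<in> Ob \<Longrightarrow> Y \<in> Ob \<Longrightarrow> (\<forall>f\<in>H X Y. \<forall>g\<in>H X Y. \<forall>h\<in>H X Y.
            add (add f g) h = add f (add g h))"
  using lin_hom[THEN conjunct2, THEN conjunct2, THEN conjunct2, THEN conjunct1] .
lemma lh5: "X \<in> Ob \<Longrightarrow> Y \<in> Ob \<Longrightarrow> (\<forall>f\<in>H X Y. \<forall>g\<in>H X Y. add f g = add g f)"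
  using lin_hom[THEN conjunct2, THEN conjunct2, THEN conjunct2, THEN conjunct2, THEN conjunct1] .
lemma lh6: "X \<in> Ob \<Longrightarrow> Y \<in> Ob \<Longrightarrow> (\<forall>f\<in>H X Y. add (zr X Y) f = f)"
  using lin_hom[THEN conjunct2, THEN conjunct2, THEN conjunct2, THEN conjunct2, THEN conjunct2, THEN conjunct1] .
lemma lh7: "X \<in> Ob \<Longrightarrow> Y \<in> Ob \<Longrightarrow> (\<forall>f\<in>H X Y. add f (lSmul D (-1) f) = zr X Y)"
  using lin_hom[THEN conjunct2, THEN conjunct2, THEN conjunct2, THEN conjunct2, THEN conjunct2, THEN conjunct2, THEN conjunct1] .
lemma lh8: "X \<in> Ob \<Longrightarrow> Y \<in> Ob \<Longrightarrow> (\<forall>c. \<forall>f\<in>H X Y. \<forall>g\<in>H X Y.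
            lSmul D c (add f g) = add (lSmul D c f) (lSmul D c g))"
  using lin_hom[THEN conjunct2, THEN conjunct2, THEN conjunct2, THEN conjunct2, THEN conjunct2, THEN conjunct2, THEN conjunct2, THEN conjunct1] .
lemma lh10: "X \<in> Ob \<Longrightarrow> Y \<in> Ob \<Longrightarrow> (\<forall>c d. \<forall>f\<in>H X Y. lSmul D (c * d) f = lSmul D c (lSmul D d f))"
  using lin_hom[THEN conjunct2, THEN conjunct2, THEN conjunct2, THEN conjunct2, THEN conjunct2, THEN conjunct2, THEN conjunct2, THEN conjunct2, THEN conjunct2, THEN conjunct1] .
lemma lh11: "X \<in> Ob \<Longrightarrow> Y \<in> Ob \<Longrightarrow> (\<forall>f\<in>H X Y. lSmul D 1 f = f)"
  using lin_hom[THEN conjunct2, THEN conjunct2, THEN conjunct2, THEN conjunct2, THEN conjunct2, THEN conjunct2, THEN conjunct2, THEN conjunct2, THEN conjunct2, THEN conjunct2] .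

lemma zr_hom[intro,simp]: "X \<in> Ob \<Longrightarrow> Y \<in> Ob \<Longrightarrow> zr X Y \<in> H X Y" using lh1 by blast
lemma add_hom[intro,simp]: "f \<in> H X Y \<Longrightarrow> g \<in> H X Y \<Longrightarrow> add f g \<in> H X Y"
  using lh2 hom_objs by blast
lemma smul_hom[intro]: "f \<in> H X Y \<Longrightarrow> lSmul D c f \<in> H X Y"
  using lh3 hom_objs by blast
lemma ng_hom[intro,simp]: "f \<in> H X Y \<Longrightarrow> ng f \<in> H X Y"
  unfolding lneg_def by blast
lemma add_assoc: "f \<in> H X Y \<Longrightarrow> g \<in> H X Y \<Longrightarrow> h \<in> H X Y \<Longrightarrow> add (add f g) h = add f (add g h)"
  using lh4 hom_objs by blast
lemma add_comm: "f \<in> H X Y \<Longrightarrow> g \<in> H X Y \<Longrightarrow> add f g = add g f"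
  using lh5 hom_objs by blast
lemma zero_add[simp]: "f \<in> H X Y \<Longrightarrow> add (zr X Y) f = f"
  using lh6 hom_objs by blast
lemma add_zero[simp]: "f \<in> H X Y \<Longrightarrow> add f (zr X Y) = f"
  using add_comm zero_add hom_objs zr_hom by metis
lemma add_ng[simp]: "f \<in> H X Y \<Longrightarrow> add f (ng f) = zr X Y"
  unfolding lneg_def using lh7 hom_objs by blast
lemma ng_add_self[simp]: "f \<in> H X Y \<Longrightarrow> add (ng f) f = zr X Y"
  using add_ng add_comm ng_hom by metis
lemma smul_add: "f \<in> H X Y \<Longrightarrow> g \<in> H X Y \<Longrightarrow> lSmul D c (add f g) = add (lSmul D c f) (lSmul D c g)"
  using lh8 hom_objs by blast
lemma smul_smul: "f \<in> H X Y \<Longrightarrow> lSmul D (c * d) f = lSmul D c (lSmul D d f)"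
  using lh10 hom_objs by blast
lemma one_smul: "f \<in> H X Y \<Longrightarrow> lSmul D 1 f = f"
  using lh11 hom_objs by blast

lemma ng_add: "f \<in> H X Y \<Longrightarrow> g \<in> H X Y \<Longrightarrow> ng (add f g) = add (ng f) (ng g)"
  unfolding lneg_def by (rule smul_add)
lemma ng_ng[simp]: "f \<in> H X Y \<Longrightarrow> ng (ng f) = f"
  unfolding lneg_def using smul_smul[of f X Y "-1" "-1"] one_smul by simp

lemma idem_zero: "x \<in> H X Y \<Longrightarrow> add x x = x \<Longrightarrow> x = zr X Y"
proof -
  assume x: "x \<in> H X Y" and e: "add x x = x"
  have "zr X Y = add x (ng x)" using x by simp
  also have "\<dots> = add (add x x) (ng x)" using e by simp
  also have "\<dots> = add x (add x (ng x))" using x by (blast intro: add_assoc)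
  also have "\<dots> = x" using x by simp
  finally show ?thesis by simp
qed

lemma ng_zr[simp]: "X \<in> Ob \<Longrightarrow> Y \<in> Ob \<Longrightarrow> ng (zr X Y) = zr X Y"
proof -
  assume o: "X \<in> Ob" "Y \<in> Ob"
  have z: "zr X Y \<in> H X Y" using o by auto
  have "ng (zr X Y) = add (zr X Y) (ng (zr X Y))" by (rule zero_add[OF ng_hom[OF z], symmetric])
  also have "\<dots> = zr X Y" by (rule add_ng[OF z])
  finally show ?thesis .
qed

lemma lin_comp: "X \<in> Ob \<Longrightarrow> Y \<in> Ob \<Longrightarrow> Z \<in> Ob \<Longrightarrow>
        (\<forall>g\<in>H Y Z. \<forall>f\<in>H X Y. \<forall>f'\<in>H X Y.
            cmp g (add f f') = add (cmp g f) (cmp g f')) \<and>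
        (\<forall>g\<in>H Y Z. \<forall>g'\<in>H Y Z. \<forall>f\<in>H X Y.
            cmp (add g g') f = add (cmp g f) (cmp g' f)) \<and>
        (\<forall>c. \<forall>g\<in>H Y Z. \<forall>f\<in>H X Y.
            cmp g (lSmul D c f) = lSmul D c (cmp g f) \<and>
            cmp (lSmul D c g) f = lSmul D c (cmp g f))"
  by (insert lD[unfolded is_linmoncat_def, THEN conjunct2, THEN conjunct2, THEN conjunct1], (drule bspec, assumption)+, assumption)

lemma comp_add_r: "g \<in> H Y Z \<Longrightarrow> f \<in> H X Y \<Longrightarrow> f' \<in> H X Y \<Longrightarrow> cmp g (add f f') = add (cmp g f) (cmp g f')"
  using lin_comp[THEN conjunct1] hom_objs by blast
lemma comp_add_l: "g \<in> H Y Z \<Longrightarrow> g' \<in> H Y Z \<Longrightarrow> f \<in> H X Y \<Longrightarrow> cmp (add g g') f = add (cmp g f) (cmp g' f)"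
  using lin_comp[THEN conjunct2, THEN conjunct1] hom_objs by blast
lemma comp_ng_r: "g \<in> H Y Z \<Longrightarrow> f \<in> H X Y \<Longrightarrow> cmp g (ng f) = ng (cmp g f)"
  unfolding lneg_def using lin_comp[THEN conjunct2, THEN conjunct2] hom_objs by blast
lemma comp_ng_l: "g \<in> H Y Z \<Longrightarrow> f \<in> H X Y \<Longrightarrow> cmp (ng g) f = ng (cmp g f)"
  unfolding lneg_def using lin_comp[THEN conjunct2, THEN conjunct2] hom_objs by blast

lemma lin_tm: "X \<in> Ob \<Longrightarrow> Y \<in> Ob \<Longrightarrow> X' \<in> Ob \<Longrightarrow> Y' \<in> Ob \<Longrightarrow>
        (\<forall>f\<in>H X Y. \<forall>f'\<in>H X Y. \<forall>g\<in>H X' Y'.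
            tm (add f f') g = add (tm f g) (tm f' g)) \<and>
        (\<forall>f\<in>H X Y. \<forall>g\<in>H X' Y'. \<forall>g'\<in>H X' Y'.
            tm f (add g g') = add (tm f g) (tm f g')) \<and>
        (\<forall>c. \<forall>f\<in>H X Y. \<forall>g\<in>H X' Y'.
            tm (lSmul D c f) g = lSmul D c (tm f g) \<and>
            tm f (lSmul D c g) = lSmul D c (tm f g))"
  by (insert lD[unfolded is_linmoncat_def, THEN conjunct2, THEN conjunct2, THEN conjunct2], (drule bspec, assumption)+, assumption)

lemma tm_add_l: "f \<in> H X Y \<Longrightarrow> f' \<in> H X Y \<Longrightarrow> g \<in> H X' Y' \<Longrightarrow> tm (add f f') g = add (tm f g) (tm f' g)"
  using lin_tm[THEN conjunct1] hom_objs by blast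
lemma tm_add_r: "f \<in> H X Y \<Longrightarrow> g \<in> H X' Y' \<Longrightarrow> g' \<in> H X' Y' \<Longrightarrow> tm f (add g g') = add (tm f g) (tm f g')"
  using lin_tm[THEN conjunct2, THEN conjunct1] hom_objs by blast
lemma tm_ng_l: "f \<in> H X Y \<Longrightarrow> g \<in> H X' Y' \<Longrightarrow> tm (ng f) g = ng (tm f g)"
  unfolding lneg_def using lin_tm[THEN conjunct2, THEN conjunct2] hom_objs by blast
lemma tm_ng_r: "f \<in> H X Y \<Longrightarrow> g \<in> H X' Y' \<Longrightarrow> tm f (ng g) = ng (tm f g)"
  unfolding lneg_def using lin_tm[THEN conjunct2, THEN conjunct2] hom_objs by blast

lemma comp_zr_l[simp]: "f \<in> H X Y \<Longrightarrow> Z \<in> Ob \<Longrightarrow> cmp (zr Y Z) f = zr X Z"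
proof -
  assume f: "f \<in> H X Y" and Z: "Z \<in> Ob"
  have Y: "Y \<in> Ob" "X \<in> Ob" using f hom_objs by auto
  have "add (cmp (zr Y Z) f) (cmp (zr Y Z) f) = cmp (add (zr Y Z) (zr Y Z)) f"
    by (rule comp_add_l[symmetric]) (use f Y Z in auto)
  also have "\<dots> = cmp (zr Y Z) f" using Y Z by auto
  finally show ?thesis by (rule idem_zero[rotated]) (use f Y Z in auto)
qed

lemma comp_zr_r[simp]: "g \<in> H Y Z \<Longrightarrow> X \<in> Ob \<Longrightarrow> cmp g (zr X Y) = zr X Z"
proof -
  assume g: "g \<in> H Y Z" and X: "X \<in> Ob"
  have Y: "Y \<in> Ob" "Z \<in> Ob" using g hom_objs by auto
  have "add (cmp g (zr X Y)) (cmp g (zr X Y)) = cmp g (add (zr X Y) (zr X Y))"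
    by (rule comp_add_r[symmetric]) (use g Y X in auto)
  also have "\<dots> = cmp g (zr X Y)" using Y X by auto
  finally show ?thesis by (rule idem_zero[rotated]) (use g Y X in auto)
qed

lemma tm_zr_l[simp]: "g \<in> H X' Y' \<Longrightarrow> X \<in> Ob \<Longrightarrow> Y \<in> Ob \<Longrightarrow> tm (zr X Y) g = zr (to X X') (to Y Y')"
proof -
  assume g: "g \<in> H X' Y'" and o: "X \<in> Ob" "Y \<in> Ob"
  have "add (tm (zr X Y) g) (tm (zr X Y) g) = tm (add (zr X Y) (zr X Y)) g"
    by (rule tm_add_l[symmetric]) (use g o in auto)
  also have "\<dots> = tm (zr X Y) g" using o by auto
  finally show ?thesis by (rule idem_zero[rotated]) (use g o in auto)
qed

lemma tm_zr_r[simp]: "f \<in> H X Y \<Longrightarrow> X' \<in> Ob \<Longrightarrow> Y' \<in> Ob \<Longrightarrow> tm f (zr X' Y') = zr (to X X') (to Y Y')"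
proof -
  assume f: "f \<in> H X Y" and o: "X' \<in> Ob" "Y' \<in> Ob"
  have "add (tm f (zr X' Y')) (tm f (zr X' Y')) = tm f (add (zr X' Y') (zr X' Y'))"
    by (rule tm_add_r[symmetric]) (use f o in auto)
  also have "\<dots> = tm f (zr X' Y')" using o by auto
  finally show ?thesis by (rule idem_zero[rotated]) (use f o in auto)
qed


section \<open>sums\<close>

abbreviation "ls \<equiv> lsum D"

lemma add_swap4: "a \<in> H X Y \<Longrightarrow> b \<in> H X Y \<Longrightarrow> c \<in> H X Y \<Longrightarrow> d \<in> H X Y \<Longrightarrow>
  add (add a b) (add c d) = add (add a c) (add b d)"
proof -
  assume h: "a \<in> H X Y" "b \<in> H X Y" "c \<in> H X Y" "d \<in> H X Y"
  have "add (add a b) (add c d) = add a (add b (add c d))" using h by (simp add: add_assoc add_hom)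
  also have "add b (add c d) = add (add b c) d" using h by (simp add: add_assoc add_hom)
  also have "add b c = add c b" using h by (simp add: add_comm)
  also have "add (add c b) d = add c (add b d)" using h by (simp add: add_assoc add_hom)
  also have "add a (add c (add b d)) = add (add a c) (add b d)" using h by (simp add: add_assoc add_hom)
  finally show ?thesis .
qed

lemma lsum_hom[intro]: "X \<in> Ob \<Longrightarrow> Y \<in> Ob \<Longrightarrow> (\<And>i. i < m \<Longrightarrow> f i \<in> H X Y) \<Longrightarrow> ls X Y f m \<in> H X Y"
  by (induction m) auto

lemma lsum_cong: "(\<And>i. i < m \<Longrightarrow> f i = g i) \<Longrightarrow> ls X Y f m = ls X Y g m"
  by (induction m) auto

lemma lsum_add: "X \<in> Ob \<Longrightarrow> Y \<in> Ob \<Longrightarrow> (\<And>i. i < m \<Longrightarrow> f i \<in> H X Y) \<Longrightarrow> (\<And>i. i < m \<Longrightarrow> g i \<in> H X Y) \<Longrightarrow>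
   ls X Y (\<lambda>i. add (f i) (g i)) m = add (ls X Y f m) (ls X Y g m)"
proof (induction m)
  case 0 then show ?case by simp
next
  case (Suc m)
  have "ls X Y (\<lambda>i. add (f i) (g i)) (Suc m) = add (add (ls X Y f m) (ls X Y g m)) (add (f m) (g m))"
    using Suc by simp
  also have "\<dots> = add (add (ls X Y f m) (f m)) (add (ls X Y g m) (g m))"
    by (rule add_swap4) (use Suc in auto)
  finally show ?case by simp
qed

lemma lsum_zero: "X \<in> Ob \<Longrightarrow> Y \<in> Ob \<Longrightarrow> (\<And>i. i < m \<Longrightarrow> f i = zr X Y) \<Longrightarrow> ls X Y f m = zr X Y"
  by (induction m) auto

lemma lsum_ng: "X \<in> Ob \<Longrightarrow> Y \<in> Ob \<Longrightarrow> (\<And>i. i < m \<Longrightarrow> f i \<in> H X Y) \<Longrightarrow>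
   ls X Y (\<lambda>i. ng (f i)) m = ng (ls X Y f m)"
proof (induction m)
  case 0 then show ?case by simp
next
  case (Suc m)
  then show ?case using ng_add[of "ls X Y f m" X Y "f m"] by (simp add: lsum_hom)
qed

lemma lsum_shift: "X \<in> Ob \<Longrightarrow> Y \<in> Ob \<Longrightarrow> (\<And>i. i < Suc m \<Longrightarrow> f i \<in> H X Y) \<Longrightarrow>
   ls X Y f (Suc m) = add (f 0) (ls X Y (\<lambda>i. f (Suc i)) m)"
proof (induction m)
  case 0 then show ?case by (simp add: add_comm)
next
  case (Suc m)
  have "ls X Y f (Suc (Suc m)) = add (add (f 0) (ls X Y (\<lambda>i. f (Suc i)) m)) (f (Suc m))"
    using Suc by simp
  also have "\<dots> = add (f 0) (add (ls X Y (\<lambda>i. f (Suc i)) m) (f (Suc m)))"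
    by (rule add_assoc) (use Suc in auto)
  finally show ?case by simp
qed

lemma lsum_rev: "X \<in> Ob \<Longrightarrow> Y \<in> Ob \<Longrightarrow> (\<And>i. i < m \<Longrightarrow> f i \<in> H X Y) \<Longrightarrow>
   ls X Y (\<lambda>i. f (m - Suc i)) m = ls X Y f m"
proof (induction m arbitrary: f)
  case 0 then show ?case by simp
next
  case (Suc m)
  have "ls X Y (\<lambda>i. f (Suc m - Suc i)) (Suc m) = add (f m) (ls X Y (\<lambda>i. f (m - Suc i)) m)"
    by (subst lsum_shift) (use Suc in auto)
  also have "ls X Y (\<lambda>i. f (m - Suc i)) m = ls X Y f m"
    using Suc by auto
  also have "add (f m) (ls X Y f m) = ls X Y f (Suc m)"
    using Suc add_comm[of "f m" X Y "ls X Y f m"] by (simp add: lsum_hom)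
  finally show ?case .
qed

lemma lsum_extend: "X \<in> Ob \<Longrightarrow> Y \<in> Ob \<Longrightarrow> m \<le> M \<Longrightarrow> (\<And>i. i < m \<Longrightarrow> f i \<in> H X Y) \<Longrightarrow>
   (\<And>i. m \<le> i \<Longrightarrow> i < M \<Longrightarrow> f i = zr X Y) \<Longrightarrow> ls X Y f M = ls X Y f m"
proof (induction M)
  case 0 then show ?case by simp
next
  case (Suc M)
  show ?case
  proof (cases "m = Suc M")
    case True then show ?thesis by simp
  next
    case False
    then have "m \<le> M" using Suc by simp
    then show ?thesis using Suc by (simp add: lsum_hom)
  qed
qed

lemma lsum_single: "X \<in> Ob \<Longrightarrow> Y \<in> Ob \<Longrightarrow> c < m \<Longrightarrow> f c \<in> H X Y \<Longrightarrow>
   (\<And>i. i < m \<Longrightarrow> i \<noteq> c \<Longrightarrow> f i = zr X Y) \<Longrightarrow> ls X Y f m = f c"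
proof (induction m)
  case 0 then show ?case by simp
next
  case (Suc m)
  show ?case
  proof (cases "c = m")
    case True
    have "ls X Y f m = zr X Y" by (rule lsum_zero) (use Suc True in auto)
    then show ?thesis using True Suc by simp
  next
    case False
    then show ?thesis using Suc by simp
  qed
qed

lemma lsum_swap: "X \<in> Ob \<Longrightarrow> Y \<in> Ob \<Longrightarrow> (\<And>i j. i < m1 \<Longrightarrow> j < m2 \<Longrightarrow> f i j \<in> H X Y) \<Longrightarrow>
   ls X Y (\<lambda>i. ls X Y (\<lambda>j. f i j) m2) m1 = ls X Y (\<lambda>j. ls X Y (\<lambda>i. f i j) m1) m2"
proof (induction m1)
  case 0 then show ?case by (simp add: lsum_zero)
next
  case (Suc m1)
  have "ls X Y (\<lambda>i. ls X Y (\<lambda>j. f i j) m2) (Suc m1)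
     = add (ls X Y (\<lambda>j. ls X Y (\<lambda>i. f i j) m1) m2) (ls X Y (\<lambda>j. f m1 j) m2)"
    using Suc by simp
  also have "\<dots> = ls X Y (\<lambda>j. add (ls X Y (\<lambda>i. f i j) m1) (f m1 j)) m2"
    by (rule lsum_add[symmetric]) (use Suc in auto)
  finally show ?case by simp
qed

lemma comp_lsum_l: "g \<in> H Y Z \<Longrightarrow> X \<in> Ob \<Longrightarrow> (\<And>i. i < m \<Longrightarrow> f i \<in> H X Y) \<Longrightarrow>
   cmp g (ls X Y f m) = ls X Z (\<lambda>i. cmp g (f i)) m"
proof (induction m)
  case 0 then show ?case using hom_objs by auto
next
  case (Suc m)
  then show ?case using hom_objs comp_add_r[of g Y Z "ls X Y f m" X "f m"] by (simp add: lsum_hom)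
qed

lemma comp_lsum_r: "h \<in> H X Y \<Longrightarrow> Z \<in> Ob \<Longrightarrow> (\<And>i. i < m \<Longrightarrow> f i \<in> H Y Z) \<Longrightarrow>
   cmp (ls Y Z f m) h = ls X Z (\<lambda>i. cmp (f i) h) m"
proof (induction m)
  case 0 then show ?case using hom_objs by auto
next
  case (Suc m)
  then show ?case using hom_objs comp_add_l[of "ls Y Z f m" Y Z "f m" h X] by (simp add: lsum_hom)
qed

lemma tm_lsum_l: "g \<in> H X' Y' \<Longrightarrow> X \<in> Ob \<Longrightarrow> Y \<in> Ob \<Longrightarrow> (\<And>i. i < m \<Longrightarrow> f i \<in> H X Y) \<Longrightarrow>
   tm (ls X Y f m) g = ls (to X X') (to Y Y') (\<lambda>i. tm (f i) g) m"
proof (induction m)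
  case 0 then show ?case using hom_objs by auto
next
  case (Suc m)
  then show ?case using hom_objs tm_add_l[of "ls X Y f m" X Y "f m" g X' Y'] by (simp add: lsum_hom)
qed

lemma tm_lsum_r: "g \<in> H X Y \<Longrightarrow> X' \<in> Ob \<Longrightarrow> Y' \<in> Ob \<Longrightarrow> (\<And>i. i < m \<Longrightarrow> f i \<in> H X' Y') \<Longrightarrow>
   tm g (ls X' Y' f m) = ls (to X X') (to Y Y') (\<lambda>i. tm g (f i)) m"
proof (induction m)
  case 0 then show ?case using hom_objs by auto
next
  case (Suc m)
  then show ?case using hom_objs tm_add_r[of g X Y "ls X' Y' f m" X' Y' "f m"] by (simp add: lsum_hom)
qed


section \<open>trivial deformation\<close>

definition seqH where "seqH p X Y \<longleftrightarrow> (\<forall>k. p k \<in> H X Y)"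

lemma seqH_D: "seqH p X Y \<Longrightarrow> p k \<in> H X Y" by (simp add: seqH_def)

lemma hom_dom: "f \<in> H X Y \<Longrightarrow> cDom D f = X" by (simp add: Hom_def)
lemma hom_cod: "f \<in> H X Y \<Longrightarrow> cCod D f = Y" by (simp add: Hom_def)

lemma tcomp_at: "seqH p X Y \<Longrightarrow> seqH q Y Z \<Longrightarrow> k \<le> N \<Longrightarrow>
   cComp (tdef D N) q p k = ls X Z (\<lambda>i. cmp (q i) (p (k - i))) (Suc k)"
  using hom_dom[OF seqH_D[of p X Y 0]] hom_cod[OF seqH_D[of q Y Z 0]]
  by (simp add: tdef_def)

lemma tcomp_seq: "seqH p X Y \<Longrightarrow> seqH q Y Z \<Longrightarrow> seqH (cComp (tdef D N) q p) X Z"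
  unfolding seqH_def
proof
  fix k assume p: "\<forall>k. p k \<in> H X Y" and q: "\<forall>k. q k \<in> H Y Z"
  have o: "X \<in> Ob" "Y \<in> Ob" "Z \<in> Ob" using p q hom_objs by blast+
  show "cComp (tdef D N) q p k \<in> H X Z"
    using hom_dom[OF p[rule_format, of 0]] hom_cod[OF q[rule_format, of 0]] p q o
    by (auto simp: tdef_def intro!: lsum_hom)
qed

lemma ttm_at: "seqH p X Y \<Longrightarrow> seqH q X' Y' \<Longrightarrow> k \<le> N \<Longrightarrow>
   mTm (tdef D N) p q k = ls (to X X') (to Y Y') (\<lambda>i. tm (p i) (q (k - i))) (Suc k)"
  using hom_dom[OF seqH_D[of p X Y 0]] hom_cod[OF seqH_D[of p X Y 0]]
     hom_dom[OF seqH_D[of q X' Y' 0]] hom_cod[OF seqH_D[of q X' Y' 0]]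
  by (simp add: tdef_def)

lemma ttm_seq: "seqH p X Y \<Longrightarrow> seqH q X' Y' \<Longrightarrow> seqH (mTm (tdef D N) p q) (to X X') (to Y Y')"
  unfolding seqH_def
proof
  fix k assume p: "\<forall>k. p k \<in> H X Y" and q: "\<forall>k. q k \<in> H X' Y'"
  have o: "X \<in> Ob" "Y \<in> Ob" "X' \<in> Ob" "Y' \<in> Ob" using p q hom_objs by blast+
  show "mTm (tdef D N) p q k \<in> H (to X X') (to Y Y')"
    using hom_dom[OF p[rule_format, of 0]] hom_cod[OF p[rule_format, of 0]]
      hom_dom[OF q[rule_format, of 0]] hom_cod[OF q[rule_format, of 0]] p q o
    by (auto simp: tdef_def intro!: lsum_hom)
qed

lemma pc0[simp]: "pconst D N f 0 = f" by (simp add: pconst_def)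
lemma pcpos: "f \<in> H X Y \<Longrightarrow> 0 < k \<Longrightarrow> pconst D N f k = zr X Y"
  by (simp add: pconst_def hom_dom hom_cod)
lemma pc_seq: "f \<in> H X Y \<Longrightarrow> seqH (pconst D N f) X Y"
  unfolding seqH_def using hom_objs by (auto simp: pconst_def hom_dom hom_cod)

lemma conv_pc_l: "g \<in> H Y Z \<Longrightarrow> (\<And>i. p i \<in> H X Y) \<Longrightarrow>
   ls X Z (\<lambda>i. cmp (pconst D N g i) (p (k - i))) (Suc k) = cmp g (p k)"
proof -
  assume g: "g \<in> H Y Z" and p: "\<And>i. p i \<in> H X Y"
  have o: "X \<in> Ob" "Y \<in> Ob" "Z \<in> Ob" using p[of 0] g hom_objs by blast+
  have "ls X Z (\<lambda>i. cmp (pconst D N g i) (p (k - i))) (Suc k) = cmp (pconst D N g 0) (p (k - 0))"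
    by (rule lsum_single) (use g p o in \<open>auto simp: pcpos\<close>)
  then show ?thesis by simp
qed

lemma conv_pc_r: "f \<in> H X Y \<Longrightarrow> (\<And>i. q i \<in> H Y Z) \<Longrightarrow>
   ls X Z (\<lambda>i. cmp (q i) (pconst D N f (k - i))) (Suc k) = cmp (q k) f"
proof -
  assume f: "f \<in> H X Y" and q: "\<And>i. q i \<in> H Y Z"
  have o: "X \<in> Ob" "Y \<in> Ob" "Z \<in> Ob" using q[of 0] f hom_objs by blast+
  have "ls X Z (\<lambda>i. cmp (q i) (pconst D N f (k - i))) (Suc k) = cmp (q k) (pconst D N f (k - k))"
    by (rule lsum_single) (use f q o in \<open>auto simp: pcpos\<close>)
  then show ?thesis by simp
qed

lemma tmconv_pc_l: "f \<in> H X Y \<Longrightarrow> (\<And>i. q i \<in> H X' Y') \<Longrightarrow>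
   ls (to X X') (to Y Y') (\<lambda>i. tm (pconst D N f i) (q (k - i))) (Suc k) = tm f (q k)"
proof -
  assume f: "f \<in> H X Y" and q: "\<And>i. q i \<in> H X' Y'"
  have o: "X \<in> Ob" "Y \<in> Ob" "X' \<in> Ob" "Y' \<in> Ob" using q[of 0] f hom_objs by blast+
  have "ls (to X X') (to Y Y') (\<lambda>i. tm (pconst D N f i) (q (k - i))) (Suc k) = tm (pconst D N f 0) (q (k - 0))"
    by (rule lsum_single) (use f q o in \<open>auto simp: pcpos\<close>)
  then show ?thesis by simp
qed

lemma tmconv_pc_r: "f \<in> H X' Y' \<Longrightarrow> (\<And>i. q i \<in> H X Y) \<Longrightarrow>
   ls (to X X') (to Y Y') (\<lambda>i. tm (q i) (pconst D N f (k - i))) (Suc k) = tm (q k) f"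
proof -
  assume f: "f \<in> H X' Y'" and q: "\<And>i. q i \<in> H X Y"
  have o: "X \<in> Ob" "Y \<in> Ob" "X' \<in> Ob" "Y' \<in> Ob" using q[of 0] f hom_objs by blast+
  have "ls (to X X') (to Y Y') (\<lambda>i. tm (q i) (pconst D N f (k - i))) (Suc k) = tm (q k) (pconst D N f (k - k))"
    by (rule lsum_single) (use f q o in \<open>auto simp: pcpos\<close>)
  then show ?thesis by simp
qed


lemma T_al[simp]: "mAssoc (tdef D N) X Y Z = pconst D N (al X Y Z)" by (simp add: tdef_def)
lemma T_id[simp]: "cId (tdef D N) X = pconst D N (idd X)" by (simp add: tdef_def)
lemma T_lu[simp]: "mLunit (tdef D N) X = pconst D N (mLunit D X)" by (simp add: tdef_def)
lemma T_ru[simp]: "mRunit (tdef D N) X = pconst D N (mRunit D X)" by (simp add: tdef_def)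
lemma T_to[simp]: "mTo (tdef D N) = mTo D" by (simp add: tdef_def)
lemma T_unit[simp]: "mUnit (tdef D N) = mUnit D" by (simp add: tdef_def)

lemma linv_cancel: "v \<in> H B A \<Longrightarrow> u \<in> H A B \<Longrightarrow> cmp v u = idd A \<Longrightarrow> x \<in> H Z A \<Longrightarrow>
   cmp u x = zr Z B \<Longrightarrow> x = zr Z A"
proof -
  assume v: "v \<in> H B A" and u: "u \<in> H A B" and vu: "cmp v u = idd A" and x: "x \<in> H Z A"
    and ux: "cmp u x = zr Z B"
  have o: "Z \<in> Ob" using x hom_objs by blast
  have "x = cmp (idd A) x" using x by simp
  also have "\<dots> = cmp (cmp v u) x" using vu by simp
  also have "\<dots> = cmp v (cmp u x)" using comp_assoc[OF x u v] by simp
  also have "\<dots> = zr Z A" using ux v o by simp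
  finally show ?thesis .
qed

lemma iso_linv: "iso D u \<Longrightarrow> u \<in> H A B \<Longrightarrow> \<exists>v. v \<in> H B A \<and> cmp v u = idd A"
  unfolding iso_def by (auto simp: hom_dom hom_cod)

lemma iso_cancel: "iso D u \<Longrightarrow> u \<in> H A B \<Longrightarrow> x \<in> H Z A \<Longrightarrow>
   cmp u x = zr Z B \<Longrightarrow> x = zr Z A"
  using iso_linv linv_cancel by metis

lemma tm_iso_cancel_l: "iso D u \<Longrightarrow> u \<in> H A B \<Longrightarrow> Y \<in> Ob \<Longrightarrow> x \<in> H Z (to A Y) \<Longrightarrow>
   cmp (tm u (idd Y)) x = zr Z (to B Y) \<Longrightarrow> x = zr Z (to A Y)"
proof -
  assume a: "iso D u" "u \<in> H A B" "Y \<in> Ob" "x \<in> H Z (to A Y)" "cmp (tm u (idd Y)) x = zr Z (to B Y)"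
  obtain v where v: "v \<in> H B A" "cmp v u = idd A" using iso_linv a by blast
  have o: "A \<in> Ob" using a hom_objs by blast
  have "cmp (tm v (idd Y)) (tm u (idd Y)) = tm (cmp v u) (cmp (idd Y) (idd Y))"
    by (rule interchange[symmetric]) (use a v in auto)
  also have "\<dots> = idd (to A Y)" using v o a by (simp add: tm_id)
  finally show ?thesis
    by (rule linv_cancel[rotated 2]) (use a v in auto)
qed

lemma tm_iso_cancel_r: "iso D u \<Longrightarrow> u \<in> H A B \<Longrightarrow> Y \<in> Ob \<Longrightarrow> x \<in> H Z (to Y A) \<Longrightarrow>
   cmp (tm (idd Y) u) x = zr Z (to Y B) \<Longrightarrow> x = zr Z (to Y A)"
proof -
  assume a: "iso D u" "u \<in> H A B" "Y \<in> Ob" "x \<in> H Z (to Y A)" "cmp (tm (idd Y) u) x = zr Z (to Y B)"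
  obtain v where v: "v \<in> H B A" "cmp v u = idd A" using iso_linv a by blast
  have o: "A \<in> Ob" using a hom_objs by blast
  have "cmp (tm (idd Y) v) (tm (idd Y) u) = tm (cmp (idd Y) (idd Y)) (cmp v u)"
    by (rule interchange[symmetric]) (use a v in auto)
  also have "\<dots> = idd (to Y A)" using v o a by (simp add: tm_id)
  finally show ?thesis
    by (rule linv_cancel[rotated 2]) (use a v in auto)
qed


lemma tm_zr_id_l[simp]: "X \<in> Ob \<Longrightarrow> Y \<in> Ob \<Longrightarrow> Z \<in> Ob \<Longrightarrow> tm (zr X Y) (idd Z) = zr (to X Z) (to Y Z)"
  using tm_zr_l id_hom by blast
lemma tm_zr_id_r[simp]: "X \<in> Ob \<Longrightarrow> Y \<in> Ob \<Longrightarrow> Z \<in> Ob \<Longrightarrow> tm (idd Z) (zr X Y) = zr (to Z X) (to Z Y)"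
  using tm_zr_r id_hom by blast


abbreviation "arr \<equiv> cArr D"
abbreviation "dm \<equiv> cDom D"
abbreviation "cd \<equiv> cCod D"

lemma arr_hom: "f \<in> arr \<Longrightarrow> f \<in> H (dm f) (cd f)" by (simp add: Hom_def)
lemma hom_arr: "f \<in> H X Y \<Longrightarrow> f \<in> arr" by (simp add: Hom_def)

lemma arr_comp[simp]: "f \<in> arr \<Longrightarrow> g \<in> arr \<Longrightarrow> cd f = dm g \<Longrightarrow> cmp g f \<in> arr"
  using comp_hom[OF arr_hom[of f]] arr_hom[of g] by (metis hom_arr)
lemma dom_comp[simp]: "f \<in> arr \<Longrightarrow> g \<in> arr \<Longrightarrow> cd f = dm g \<Longrightarrow> dm (cmp g f) = dm f"
  using comp_hom[OF arr_hom[of f]] arr_hom[of g] by (metis hom_dom)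
lemma cod_comp[simp]: "f \<in> arr \<Longrightarrow> g \<in> arr \<Longrightarrow> cd f = dm g \<Longrightarrow> cd (cmp g f) = cd g"
  using comp_hom[OF arr_hom[of f]] arr_hom[of g] by (metis hom_cod)
lemma arr_tm[simp]: "f \<in> arr \<Longrightarrow> g \<in> arr \<Longrightarrow> tm f g \<in> arr"
  by (rule hom_arr[OF tm_hom[OF arr_hom[of f] arr_hom[of g]]])
lemma dom_tm[simp]: "f \<in> arr \<Longrightarrow> g \<in> arr \<Longrightarrow> dm (tm f g) = to (dm f) (dm g)"
  by (rule hom_dom[OF tm_hom[OF arr_hom[of f] arr_hom[of g]]])
lemma cod_tm[simp]: "f \<in> arr \<Longrightarrow> g \<in> arr \<Longrightarrow> cd (tm f g) = to (cd f) (cd g)"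
  by (rule hom_cod[OF tm_hom[OF arr_hom[of f] arr_hom[of g]]])
lemma arr_id[simp]: "X \<in> Ob \<Longrightarrow> idd X \<in> arr" by (rule hom_arr[OF id_hom])
lemma dom_id[simp]: "X \<in> Ob \<Longrightarrow> dm (idd X) = X" by (rule hom_dom[OF id_hom])
lemma cod_id[simp]: "X \<in> Ob \<Longrightarrow> cd (idd X) = X" by (rule hom_cod[OF id_hom])
lemma arr_al[simp]: "X \<in> Ob \<Longrightarrow> Y \<in> Ob \<Longrightarrow> Z \<in> Ob \<Longrightarrow> al X Y Z \<in> arr" by (rule hom_arr[OF al_hom])
lemma dom_al[simp]: "X \<in> Ob \<Longrightarrow> Y \<in> Ob \<Longrightarrow> Z \<in> Ob \<Longrightarrow> dm (al X Y Z) = to (to X Y) Z" by (rule hom_dom[OF al_hom])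
lemma cod_al[simp]: "X \<in> Ob \<Longrightarrow> Y \<in> Ob \<Longrightarrow> Z \<in> Ob \<Longrightarrow> cd (al X Y Z) = to X (to Y Z)" by (rule hom_cod[OF al_hom])
lemma dm_ob[simp]: "f \<in> arr \<Longrightarrow> dm f \<in> Ob" using hom_objs[OF arr_hom] by blast
lemma cd_ob[simp]: "f \<in> arr \<Longrightarrow> cd f \<in> Ob" using hom_objs[OF arr_hom] by blast

lemma assocR: "f \<in> arr \<Longrightarrow> g \<in> arr \<Longrightarrow> h \<in> arr \<Longrightarrow> cd f = dm g \<Longrightarrow> cd g = dm h \<Longrightarrow>
  cmp (cmp h g) f = cmp h (cmp g f)"
  using comp_assoc[OF arr_hom[of f] _ arr_hom[of h], of g] arr_hom[of g] by metis
lemma idL: "f \<in> arr \<Longrightarrow> cd f = Y \<Longrightarrow> cmp (idd Y) f = f" using arr_hom id_left by blast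
lemma idR: "f \<in> arr \<Longrightarrow> dm f = X \<Longrightarrow> cmp f (idd X) = f" using arr_hom id_right by blast
lemma merge: "f \<in> arr \<Longrightarrow> g \<in> arr \<Longrightarrow> f' \<in> arr \<Longrightarrow> g' \<in> arr \<Longrightarrow> cd f = dm g \<Longrightarrow> cd f' = dm g' \<Longrightarrow>
  cmp (tm g g') (tm f f') = tm (cmp g f) (cmp g' f')"
proof -
  assume a: "f \<in> arr" "g \<in> arr" "f' \<in> arr" "g' \<in> arr" "cd f = dm g" "cd f' = dm g'"
  have "g \<in> H (cd f) (cd g)" "g' \<in> H (cd f') (cd g')" using a arr_hom by auto
  then show ?thesis using interchange[OF arr_hom[of f] _ arr_hom[of f']] a by simp
qed
lemma merge2: "f \<in> arr \<Longrightarrow> g \<in> arr \<Longrightarrow> f' \<in> arr \<Longrightarrow> g' \<in> arr \<Longrightarrow> r \<in> arr \<Longrightarrow> cd f = dm g \<Longrightarrow> cd f' = dm g' \<Longrightarrow>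
  cd r = to (dm f) (dm f') \<Longrightarrow>
  cmp (tm g g') (cmp (tm f f') r) = cmp (tm (cmp g f) (cmp g' f')) r"
  by (subst assocR[symmetric]) (simp_all add: merge)
lemma tm_idR: "X \<in> Ob \<Longrightarrow> Y \<in> Ob \<Longrightarrow> tm (idd X) (idd Y) = idd (to X Y)" by (rule tm_id)

lemmas norm = assocR idL idR merge merge2 tm_idR

lemma al_nat_a: "f \<in> arr \<Longrightarrow> g \<in> arr \<Longrightarrow> h \<in> arr \<Longrightarrow>
   cmp (al (cd f) (cd g) (cd h)) (tm (tm f g) h) = cmp (tm f (tm g h)) (al (dm f) (dm g) (dm h))"
  by (rule al_nat) (auto intro: arr_hom)
lemma al_nat_t: "f \<in> arr \<Longrightarrow> g \<in> arr \<Longrightarrow> h \<in> arr \<Longrightarrow> r \<in> arr \<Longrightarrow> cd r = to (to (dm f) (dm g)) (dm h) \<Longrightarrow>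
   cmp (tm f (tm g h)) (cmp (al (dm f) (dm g) (dm h)) r) = cmp (al (cd f) (cd g) (cd h)) (cmp (tm (tm f g) h) r)"
  by (simp add: assocR[symmetric] al_nat_a)
lemma al_nat_t2: "f \<in> arr \<Longrightarrow> g \<in> arr \<Longrightarrow> h \<in> arr \<Longrightarrow> r \<in> arr \<Longrightarrow> cd r = to (to (dm f) (dm g)) (dm h) \<Longrightarrow>
   cmp (al (cd f) (cd g) (cd h)) (cmp (tm (tm f g) h) r) = cmp (tm f (tm g h)) (cmp (al (dm f) (dm g) (dm h)) r)"
  by (simp add: assocR[symmetric] al_nat_a)


lemma al_nat_s: "f \<in> arr \<Longrightarrow> g \<in> arr \<Longrightarrow> h \<in> arr \<Longrightarrow> r \<in> arr \<Longrightarrow> dm f = X \<Longrightarrow> dm g = Y \<Longrightarrow> dm h = Z \<Longrightarrow>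
   cd r = to (to X Y) Z \<Longrightarrow>
   cmp (tm f (tm g h)) (cmp (al X Y Z) r) = cmp (al (cd f) (cd g) (cd h)) (cmp (tm (tm f g) h) r)"
  using al_nat_t by blast
lemma al_nat_g: "f \<in> arr \<Longrightarrow> g \<in> arr \<Longrightarrow> h \<in> arr \<Longrightarrow> r \<in> arr \<Longrightarrow> dm f = X \<Longrightarrow> dm g = Y \<Longrightarrow> dm h = Z \<Longrightarrow>
   cd f = X' \<Longrightarrow> cd g = Y' \<Longrightarrow> cd h = Z' \<Longrightarrow> cd r = to (to X Y) Z \<Longrightarrow>
   cmp (al X' Y' Z') (cmp (tm (tm f g) h) r) = cmp (tm f (tm g h)) (cmp (al X Y Z) r)"
  using al_nat_t2 by blast
lemma pentagon_t: "W \<in> Ob \<Longrightarrow> X \<in> Ob \<Longrightarrow> Y \<in> Ob \<Longrightarrow> Z \<in> Ob \<Longrightarrow> r \<in> arr \<Longrightarrow> cd r = to (to (to W X) Y) Z \<Longrightarrow>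
   cmp (tm (idd W) (al X Y Z)) (cmp (al W (to X Y) Z) (cmp (tm (al W X Y) (idd Z)) r))
   = cmp (al W X (to Y Z)) (cmp (al (to W X) Y Z) r)"
proof -
  assume o: "W \<in> Ob" "X \<in> Ob" "Y \<in> Ob" "Z \<in> Ob" "r \<in> arr" "cd r = to (to (to W X) Y) Z"
  have "cmp (tm (idd W) (al X Y Z)) (cmp (al W (to X Y) Z) (cmp (tm (al W X Y) (idd Z)) r))
      = cmp (cmp (tm (idd W) (al X Y Z)) (cmp (al W (to X Y) Z) (tm (al W X Y) (idd Z)))) r"
    using o by (simp add: assocR)
  also have "\<dots> = cmp (cmp (al W X (to Y Z)) (al (to W X) Y Z)) r" using pentagon o by simp
  also have "\<dots> = cmp (al W X (to Y Z)) (cmp (al (to W X) Y Z) r)" using o by (simp add: assocR)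
  finally show ?thesis .
qed


section \<open>additive maps\<close>

definition addmap where "addmap L X Y X' Y' \<longleftrightarrow> X' \<in> Ob \<and> Y' \<in> Ob \<and>
  (\<forall>x\<in>H X Y. L x \<in> H X' Y') \<and> (\<forall>x\<in>H X Y. \<forall>y\<in>H X Y. L (add x y) = add (L x) (L y)) \<and>
  (\<forall>x\<in>H X Y. L (ng x) = ng (L x)) \<and> L (zr X Y) = zr X' Y'"

lemma addmap_hom: "addmap L X Y X' Y' \<Longrightarrow> x \<in> H X Y \<Longrightarrow> L x \<in> H X' Y'" unfolding addmap_def by blast
lemma addmap_add: "addmap L X Y X' Y' \<Longrightarrow> x \<in> H X Y \<Longrightarrow> y \<in> H X Y \<Longrightarrow> L (add x y) = add (L x) (L y)"
  unfolding addmap_def by blast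
lemma addmap_ng: "addmap L X Y X' Y' \<Longrightarrow> x \<in> H X Y \<Longrightarrow> L (ng x) = ng (L x)" unfolding addmap_def by blast
lemma addmap_zr: "addmap L X Y X' Y' \<Longrightarrow> L (zr X Y) = zr X' Y'" unfolding addmap_def by blast

lemma addmap_ls: "addmap L X Y X' Y' \<Longrightarrow> (\<And>i. i < m \<Longrightarrow> f i \<in> H X Y) \<Longrightarrow> X \<in> Ob \<Longrightarrow> Y \<in> Ob \<Longrightarrow>
   L (ls X Y f m) = ls X' Y' (\<lambda>i. L (f i)) m"
  by (induction m) (auto simp: addmap_zr addmap_add[where X=X and Y=Y] lsum_hom)

lemma addmap_comp: "addmap L1 X Y X' Y' \<Longrightarrow> addmap L2 X' Y' X'' Y'' \<Longrightarrow> addmap (\<lambda>x. L2 (L1 x)) X Y X'' Y''"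
  unfolding addmap_def by auto

lemma addmap_cmpL: "g \<in> H Y Z \<Longrightarrow> X \<in> Ob \<Longrightarrow> addmap (\<lambda>x. cmp g x) X Y X Z"
  unfolding addmap_def using hom_objs[of g Y Z]
  by (auto simp: comp_add_r comp_ng_r intro: comp_hom)
lemma addmap_cmpR: "h \<in> H X Y \<Longrightarrow> Z \<in> Ob \<Longrightarrow> addmap (\<lambda>x. cmp x h) Y Z X Z"
  unfolding addmap_def using hom_objs[of h X Y]
  by (auto simp: comp_add_l comp_ng_l intro: comp_hom)
lemma addmap_tmL: "g \<in> H X' Y' \<Longrightarrow> X \<in> Ob \<Longrightarrow> Y \<in> Ob \<Longrightarrow> addmap (\<lambda>x. tm x g) X Y (to X X') (to Y Y')"
  unfolding addmap_def using hom_objs[of g X' Y']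
  by (auto simp: tm_add_l tm_ng_l intro: tm_hom)
lemma addmap_tmR: "g \<in> H X Y \<Longrightarrow> X' \<in> Ob \<Longrightarrow> Y' \<in> Ob \<Longrightarrow> addmap (\<lambda>x. tm g x) X' Y' (to X X') (to Y Y')"
  unfolding addmap_def using hom_objs[of g X Y]
  by (auto simp: tm_add_r tm_ng_r intro: tm_hom)

lemma addmap_pn: "addmap L X Y X' Y' \<Longrightarrow> X \<in> Ob \<Longrightarrow> Y \<in> Ob \<Longrightarrow> (\<And>i. i < m \<Longrightarrow> p i \<in> H X Y) \<Longrightarrow> (\<And>i. i < m \<Longrightarrow> q i \<in> H X Y) \<Longrightarrow>
   L (ls X Y (\<lambda>i. add (p i) (ng (q i))) m) = ls X' Y' (\<lambda>i. add (L (p i)) (ng (L (q i)))) m"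
  by (subst addmap_ls[where X=X and Y=Y]) (auto simp: addmap_add[where X=X and Y=Y] addmap_ng[where X=X and Y=Y] intro!: lsum_cong)


section \<open>group identity and cube sums\<close>

lemma right_comm: "a \<in> H X Y \<Longrightarrow> b \<in> H X Y \<Longrightarrow> c \<in> H X Y \<Longrightarrow> add (add a b) c = add (add a c) b"
  by (simp add: add_assoc[where X=X and Y=Y] add_comm[of b X Y c])

lemma tele: "a \<in> H X Y \<Longrightarrow> b \<in> H X Y \<Longrightarrow> c \<in> H X Y \<Longrightarrow> add (add a (ng b)) (add b (ng c)) = add a (ng c)"
proof -
  assume h: "a \<in> H X Y" "b \<in> H X Y" "c \<in> H X Y"
  have "add (add a (ng b)) (add b (ng c)) = add a (add (ng b) (add b (ng c)))"
    using h by (simp add: add_assoc[where X=X and Y=Y])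
  also have "add (ng b) (add b (ng c)) = add (add (ng b) b) (ng c)"
    by (rule add_assoc[OF ng_hom[OF h(2)] h(2) ng_hom[OF h(3)], symmetric])
  also have "\<dots> = add (zr X Y) (ng c)" by (simp only: ng_add_self[OF h(2)])
  also have "\<dots> = ng c" by (rule zero_add[OF ng_hom[OF h(3)]])
  finally show ?thesis .
qed

lemma ngd: "a \<in> H X Y \<Longrightarrow> b \<in> H X Y \<Longrightarrow> ng (add a (ng b)) = add b (ng a)"
  using ng_add[of a X Y "ng b"] add_comm[of "ng a" X Y b] by simp

lemma grp5: "y1 \<in> H X Y \<Longrightarrow> y2 \<in> H X Y \<Longrightarrow> y3 \<in> H X Y \<Longrightarrow> y4 \<in> H X Y \<Longrightarrow> y5 \<in> H X Y \<Longrightarrow>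
  add (add (add (add (add y1 (ng y5)) (ng (add y4 (ng y2)))) (add y3 (ng y1))) (ng (add y2 (ng y5)))) (add y4 (ng y3)) = zr X Y"
proof -
  assume h: "y1 \<in> H X Y" "y2 \<in> H X Y" "y3 \<in> H X Y" "y4 \<in> H X Y" "y5 \<in> H X Y"
  let ?d = "\<lambda>a b. add a (ng b)"
  have "add (add (add (add (add y1 (ng y5)) (ng (add y4 (ng y2)))) (add y3 (ng y1))) (ng (add y2 (ng y5)))) (add y4 (ng y3))
     = add (add (add (add (?d y1 y5) (?d y2 y4)) (?d y3 y1)) (?d y5 y2)) (?d y4 y3)"
    using h by (simp add: ngd[where X=X and Y=Y])
  also have "\<dots> = add (add (add (add (?d y1 y5) (?d y2 y4)) (?d y5 y2)) (?d y3 y1)) (?d y4 y3)"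
    by (rule arg_cong[where f="\<lambda>z. add z (?d y4 y3)"], rule right_comm[where X=X and Y=Y]) (use h in simp_all)
  also have "\<dots> = add (add (add (add (?d y1 y5) (?d y5 y2)) (?d y2 y4)) (?d y3 y1)) (?d y4 y3)"
    by (rule arg_cong[where f="\<lambda>z. add (add z (?d y3 y1)) (?d y4 y3)"], rule right_comm[where X=X and Y=Y]) (use h in simp_all)
  also have "\<dots> = add (add (add (add (?d y1 y5) (?d y5 y2)) (?d y2 y4)) (?d y4 y3)) (?d y3 y1)"
    by (rule right_comm[where X=X and Y=Y]) (use h in simp_all)
  also have "add (?d y1 y5) (?d y5 y2) = ?d y1 y2" by (rule tele[where X=X and Y=Y]) (use h in simp_all)
  also have "add (?d y1 y2) (?d y2 y4) = ?d y1 y4" by (rule tele[where X=X and Y=Y]) (use h in simp_all)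
  also have "add (?d y1 y4) (?d y4 y3) = ?d y1 y3" by (rule tele[where X=X and Y=Y]) (use h in simp_all)
  also have "add (?d y1 y3) (?d y3 y1) = ?d y1 y1" by (rule tele[where X=X and Y=Y]) (use h in simp_all)
  also have "?d y1 y1 = zr X Y" using h by simp
  finally show ?thesis .
qed

definition cube where "cube X Y N f = ls X Y (\<lambda>a. ls X Y (\<lambda>b. ls X Y (\<lambda>c.
   if a + b + c = N then f a b c else zr X Y) (Suc N)) (Suc N)) (Suc N)"

lemma cube_tri: "X \<in> Ob \<Longrightarrow> Y \<in> Ob \<Longrightarrow> (\<And>a b c. f a b c \<in> H X Y) \<Longrightarrow>
  cube X Y N f = ls X Y (\<lambda>a. ls X Y (\<lambda>b. f a b (N - a - b)) (Suc (N - a))) (Suc N)"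
  unfolding cube_def
proof (rule lsum_cong)
  fix a assume a: "a < Suc N" and o: "X \<in> Ob" "Y \<in> Ob" and f: "\<And>a b c. f a b c \<in> H X Y"
  have 1: "ls X Y (\<lambda>c. if a + b + c = N then f a b c else zr X Y) (Suc N)
        = (if a + b \<le> N then f a b (N - a - b) else zr X Y)" if "b < Suc N" for b
  proof (cases "a + b \<le> N")
    case True
    have "ls X Y (\<lambda>c. if a + b + c = N then f a b c else zr X Y) (Suc N)
       = (if a + b + (N - a - b) = N then f a b (N - a - b) else zr X Y)"
      by (rule lsum_single) (use True o f in auto)
    then show ?thesis using True by simp
  next
    case False
    have "ls X Y (\<lambda>c. if a + b + c = N then f a b c else zr X Y) (Suc N) = zr X Y"
      by (rule lsum_zero) (use False o in auto)
    then show ?thesis using False by simp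
  qed
  have "ls X Y (\<lambda>b. ls X Y (\<lambda>c. if a + b + c = N then f a b c else zr X Y) (Suc N)) (Suc N)
     = ls X Y (\<lambda>b. if a + b \<le> N then f a b (N - a - b) else zr X Y) (Suc N)"
    using 1 by (rule lsum_cong)
  also have "\<dots> = ls X Y (\<lambda>b. if a + b \<le> N then f a b (N - a - b) else zr X Y) (Suc (N - a))"
    by (rule lsum_extend) (use a o f in auto)
  also have "\<dots> = ls X Y (\<lambda>b. f a b (N - a - b)) (Suc (N - a))"
    by (rule lsum_cong) (use a in auto)
  finally show "ls X Y (\<lambda>b. ls X Y (\<lambda>c. if a + b + c = N then f a b c else zr X Y) (Suc N)) (Suc N)
     = ls X Y (\<lambda>b. f a b (N - a - b)) (Suc (N - a))" .
qed

lemma cube_hom: "X \<in> Ob \<Longrightarrow> Y \<in> Ob \<Longrightarrow> (\<And>a b c. f a b c \<in> H X Y) \<Longrightarrow> cube X Y N f \<in> H X Y"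
  unfolding cube_def by (intro lsum_hom) auto

lemma cube_add: "X \<in> Ob \<Longrightarrow> Y \<in> Ob \<Longrightarrow> (\<And>a b c. f a b c \<in> H X Y) \<Longrightarrow> (\<And>a b c. g a b c \<in> H X Y) \<Longrightarrow>
  cube X Y N (\<lambda>a b c. add (f a b c) (g a b c)) = add (cube X Y N f) (cube X Y N g)"
proof -
  assume o: "X \<in> Ob" "Y \<in> Ob" and f: "\<And>a b c. f a b c \<in> H X Y" and g: "\<And>a b c. g a b c \<in> H X Y"
  have e: "(if P then add u v else zr X Y) = add (if P then u else zr X Y) (if P then v else zr X Y)" for P u v
    using o by simp
  show ?thesis unfolding cube_def e using o f g by (simp add: lsum_add lsum_hom del: lsum.simps)
qed

lemma cube_ng: "X \<in> Ob \<Longrightarrow> Y \<in> Ob \<Longrightarrow> (\<And>a b c. f a b c \<in> H X Y) \<Longrightarrow>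
  cube X Y N (\<lambda>a b c. ng (f a b c)) = ng (cube X Y N f)"
proof -
  assume o: "X \<in> Ob" "Y \<in> Ob" and f: "\<And>a b c. f a b c \<in> H X Y"
  have e: "(if P then ng u else zr X Y) = ng (if P then u else zr X Y)" for P u
    using o by simp
  show ?thesis unfolding cube_def e using o f by (simp add: lsum_ng lsum_hom del: lsum.simps)
qed

lemma cube_rot: "X \<in> Ob \<Longrightarrow> Y \<in> Ob \<Longrightarrow> (\<And>a b c. f a b c \<in> H X Y) \<Longrightarrow>
  cube X Y N (\<lambda>a b c. f b c a) = cube X Y N f"
proof -
  assume o: "X \<in> Ob" "Y \<in> Ob" and f: "\<And>a b c. f a b c \<in> H X Y"
  have "cube X Y N (\<lambda>a b c. f b c a) = ls X Y (\<lambda>b. ls X Y (\<lambda>a. ls X Y (\<lambda>c.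
     if a + b + c = N then f b c a else zr X Y) (Suc N)) (Suc N)) (Suc N)"
    unfolding cube_def by (rule lsum_swap) (use o f in \<open>auto intro!: lsum_hom\<close>)
  also have "\<dots> = ls X Y (\<lambda>b. ls X Y (\<lambda>c. ls X Y (\<lambda>a.
     if a + b + c = N then f b c a else zr X Y) (Suc N)) (Suc N)) (Suc N)"
    by (rule lsum_cong, rule lsum_swap) (use o f in auto)
  also have "\<dots> = cube X Y N f"
    unfolding cube_def by (intro lsum_cong) (simp add: ac_simps)
  finally show ?thesis .
qed

lemma cube_swap: "X \<in> Ob \<Longrightarrow> Y \<in> Ob \<Longrightarrow> (\<And>a b c. f a b c \<in> H X Y) \<Longrightarrow>
  cube X Y N (\<lambda>a b c. f b a c) = cube X Y N f"
proof -
  assume o: "X \<in> Ob" "Y \<in> Ob" and f: "\<And>a b c. f a b c \<in> H X Y"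
  have "cube X Y N (\<lambda>a b c. f b a c) = ls X Y (\<lambda>b. ls X Y (\<lambda>a. ls X Y (\<lambda>c.
     if a + b + c = N then f b a c else zr X Y) (Suc N)) (Suc N)) (Suc N)"
    unfolding cube_def by (rule lsum_swap) (use o f in \<open>auto intro!: lsum_hom\<close>)
  also have "\<dots> = cube X Y N f"
    unfolding cube_def by (intro lsum_cong) (simp add: ac_simps)
  finally show ?thesis .
qed


lemma zr_arr[simp]: "X \<in> Ob \<Longrightarrow> Y \<in> Ob \<Longrightarrow> zr X Y \<in> arr" by (rule hom_arr[OF zr_hom])
lemma dm_zr[simp]: "X \<in> Ob \<Longrightarrow> Y \<in> Ob \<Longrightarrow> dm (zr X Y) = X" by (rule hom_dom[OF zr_hom])
lemma cd_zr[simp]: "X \<in> Ob \<Longrightarrow> Y \<in> Ob \<Longrightarrow> cd (zr X Y) = Y" by (rule hom_cod[OF zr_hom])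
lemma cmp_zr_a1[simp]: "f \<in> arr \<Longrightarrow> cd f = Y \<Longrightarrow> Z \<in> Ob \<Longrightarrow> cmp (zr Y Z) f = zr (dm f) Z"
  using comp_zr_l[OF arr_hom[of f]] by simp
lemma cmp_zr_a2[simp]: "g \<in> arr \<Longrightarrow> dm g = Y \<Longrightarrow> X \<in> Ob \<Longrightarrow> cmp g (zr X Y) = zr X (cd g)"
  using comp_zr_r[OF arr_hom[of g]] by simp
lemma tm_zr_a1[simp]: "g \<in> arr \<Longrightarrow> X \<in> Ob \<Longrightarrow> Y \<in> Ob \<Longrightarrow> tm (zr X Y) g = zr (to X (dm g)) (to Y (cd g))"
  using tm_zr_l[OF arr_hom[of g]] by simp
lemma tm_zr_a2[simp]: "f \<in> arr \<Longrightarrow> X \<in> Ob \<Longrightarrow> Y \<in> Ob \<Longrightarrow> tm f (zr X Y) = zr (to (dm f) X) (to (cd f) Y)"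
  using tm_zr_r[OF arr_hom[of f]] by simp

end


locale Main = LD D for D :: "('k::field, 'o2, 'm2, 'z2) linmoncat_scheme" +
  fixes C :: "('o1, 'm1, 'z1) moncat_scheme"
    and FO :: "'o1 \<Rightarrow> 'o2" and FM :: "'m1 \<Rightarrow> 'm2"
    and Ft :: "'o1 \<Rightarrow> 'o1 \<Rightarrow> 'm2" and F0 :: "'m2"
    and n :: nat and Fk :: "nat \<Rightarrow> 'o1 \<Rightarrow> 'o1 \<Rightarrow> 'm2"
  assumes mC: "is_moncat C"
    and mf: "is_monfun C D FO FM Ft F0"
    and pd: "is_proper_deformation C D FO FM Ft F0 n Fk"
begin

abbreviation "ObC \<equiv> cObj C"
abbreviation "HC \<equiv> Hom C"
abbreviation "toC \<equiv> mTo C"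
abbreviation "tmC \<equiv> mTm C"
abbreviation "cmpC \<equiv> cComp C"
abbreviation "alC \<equiv> mAssoc C"
abbreviation "IC \<equiv> mUnit C"

lemma cC: "is_cat C" using mC unfolding is_moncat_def by (rule conjunct1)

lemma homC_objs: "f \<in> HC X Y \<Longrightarrow> X \<in> ObC \<and> Y \<in> ObC"
  using cC[unfolded is_cat_def, THEN conjunct2, THEN conjunct1] unfolding Hom_def by auto
lemma idC_hom[intro]: "X \<in> ObC \<Longrightarrow> cId C X \<in> HC X X"
  using cC[unfolded is_cat_def, THEN conjunct1] by blast
lemma compC_hom[intro]: "f \<in> HC X Y \<Longrightarrow> g \<in> HC Y Z \<Longrightarrow> cmpC g f \<in> HC X Z"
  using cC[unfolded is_cat_def, THEN conjunct2, THEN conjunct2, THEN conjunct1] unfolding Hom_def by auto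
lemma unitC_ob[intro,simp]: "IC \<in> ObC"
  using mC[unfolded is_moncat_def, THEN conjunct2, THEN conjunct1] .
lemma toC_ob[intro,simp]: "X \<in> ObC \<Longrightarrow> Y \<in> ObC \<Longrightarrow> toC X Y \<in> ObC"
  using mC[unfolded is_moncat_def, THEN conjunct2, THEN conjunct2, THEN conjunct1] by blast
lemma tmC_hom[intro]: "f \<in> HC X Y \<Longrightarrow> g \<in> HC X' Y' \<Longrightarrow> tmC f g \<in> HC (toC X X') (toC Y Y')"
  using mC[unfolded is_moncat_def, THEN conjunct2, THEN conjunct2, THEN conjunct2, THEN conjunct1]
  unfolding Hom_def by auto
lemma alC_hom[intro]: "X \<in> ObC \<Longrightarrow> Y \<in> ObC \<Longrightarrow> Z \<in> ObC \<Longrightarrow> alC X Y Z \<in> HC (toC (toC X Y) Z) (toC X (toC Y Z))"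
  using mC[unfolded is_moncat_def, THEN conjunct2, THEN conjunct2, THEN conjunct2, THEN conjunct2,
      THEN conjunct2, THEN conjunct2, THEN conjunct1] by blast
lemma lunitC_hom[intro]: "X \<in> ObC \<Longrightarrow> mLunit C X \<in> HC (toC IC X) X"
  using mC[unfolded is_moncat_def, THEN conjunct2, THEN conjunct2, THEN conjunct2, THEN conjunct2,
      THEN conjunct2, THEN conjunct2, THEN conjunct2, THEN conjunct1] by blast
lemma runitC_hom[intro]: "X \<in> ObC \<Longrightarrow> mRunit C X \<in> HC (toC X IC) X"
  using mC[unfolded is_moncat_def, THEN conjunct2, THEN conjunct2, THEN conjunct2, THEN conjunct2,
      THEN conjunct2, THEN conjunct2, THEN conjunct2, THEN conjunct2, THEN conjunct1] by blast
lemma alC_nat: "f \<in> HC X X' \<Longrightarrow> g \<in> HC Y Y' \<Longrightarrow> h \<in> HC Z Z' \<Longrightarrow>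
   cmpC (alC X' Y' Z') (tmC (tmC f g) h) = cmpC (tmC f (tmC g h)) (alC X Y Z)"
proof -
  assume a: "f \<in> HC X X'" "g \<in> HC Y Y'" "h \<in> HC Z Z'"
  have "\<forall>f\<in>cArr C. \<forall>g\<in>cArr C. \<forall>h\<in>cArr C.
        cmpC (alC (cCod C f) (cCod C g) (cCod C h)) (tmC (tmC f g) h)
        = cmpC (tmC f (tmC g h)) (alC (cDom C f) (cDom C g) (cDom C h))"
    using mC[unfolded is_moncat_def, THEN conjunct2, THEN conjunct2, THEN conjunct2, THEN conjunct2,
      THEN conjunct2, THEN conjunct2, THEN conjunct2, THEN conjunct2, THEN conjunct2, THEN conjunct1] .
  then show ?thesis using a unfolding Hom_def by auto
qed
lemma pentagonC: "W \<in> ObC \<Longrightarrow> X \<in> ObC \<Longrightarrow> Y \<in> ObC \<Longrightarrow> Z \<in> ObC \<Longrightarrow>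
        cmpC (tmC (cId C W) (alC X Y Z))
          (cmpC (alC W (toC X Y) Z) (tmC (alC W X Y) (cId C Z)))
        = cmpC (alC W X (toC Y Z)) (alC (toC W X) Y Z)"
  using mC[unfolded is_moncat_def, THEN conjunct2, THEN conjunct2, THEN conjunct2, THEN conjunct2,
      THEN conjunct2, THEN conjunct2, THEN conjunct2, THEN conjunct2, THEN conjunct2, THEN conjunct2,
      THEN conjunct2, THEN conjunct2, THEN conjunct1] by blast

section \<open>functor\<close>

lemma isF: "is_functor C D FO FM"
  using mf[unfolded is_monfun_def, THEN conjunct2, THEN conjunct2, THEN conjunct1] .

lemma FO_ob[intro,simp]: "X \<in> ObC \<Longrightarrow> FO X \<in> Ob"
  using isF[unfolded is_functor_def, THEN conjunct1] by blast
lemma FM_hom[intro]: "f \<in> HC X Y \<Longrightarrow> FM f \<in> H (FO X) (FO Y)"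
  using isF[unfolded is_functor_def, THEN conjunct2, THEN conjunct1] unfolding Hom_def by auto
lemma FM_id[simp]: "X \<in> ObC \<Longrightarrow> FM (cId C X) = idd (FO X)"
  using isF[unfolded is_functor_def, THEN conjunct2, THEN conjunct2, THEN conjunct1] by blast
lemma FM_comp: "f \<in> HC X Y \<Longrightarrow> g \<in> HC Y Z \<Longrightarrow> FM (cmpC g f) = cmp (FM g) (FM f)"
  using isF[unfolded is_functor_def, THEN conjunct2, THEN conjunct2, THEN conjunct2] unfolding Hom_def by auto

lemma Ft_hom[intro]: "X \<in> ObC \<Longrightarrow> Y \<in> ObC \<Longrightarrow> Ft X Y \<in> H (FO (toC X Y)) (to (FO X) (FO Y))"
  using mf[unfolded is_monfun_def, THEN conjunct2, THEN conjunct2, THEN conjunct2, THEN conjunct1] by blast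
lemma Ft_nat: "f \<in> HC X X' \<Longrightarrow> g \<in> HC Y Y' \<Longrightarrow>
   cmp (Ft X' Y') (FM (tmC f g)) = cmp (tm (FM f) (FM g)) (Ft X Y)"
  using mf[unfolded is_monfun_def, THEN conjunct2, THEN conjunct2, THEN conjunct2, THEN conjunct2, THEN conjunct1]
  unfolding Hom_def by auto
lemma F0_hom: "F0 \<in> H (FO IC) (mUnit D)"
  using mf[unfolded is_monfun_def, THEN conjunct2, THEN conjunct2, THEN conjunct2, THEN conjunct2,
     THEN conjunct2, THEN conjunct1] .
lemma F0_iso: "iso D F0"
  using mf[unfolded is_monfun_def, THEN conjunct2, THEN conjunct2, THEN conjunct2, THEN conjunct2,
     THEN conjunct2, THEN conjunct2, THEN conjunct1] .

lemma Fk_X2: "1 \<le> k \<Longrightarrow> k \<le> n \<Longrightarrow> inX2 C D FO FM (Fk k)"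
  using pd[unfolded is_proper_deformation_def, THEN conjunct1] by auto
lemma Fk_hom: "1 \<le> k \<Longrightarrow> k \<le> n \<Longrightarrow> X \<in> ObC \<Longrightarrow> Y \<in> ObC \<Longrightarrow> Fk k X Y \<in> H (FO (toC X Y)) (to (FO X) (FO Y))"
  using Fk_X2[unfolded inX2_def, THEN conjunct1] by blast
lemma Fk_nat: "1 \<le> k \<Longrightarrow> k \<le> n \<Longrightarrow> f \<in> HC X X' \<Longrightarrow> g \<in> HC Y Y' \<Longrightarrow>
   cmp (Fk k X' Y') (FM (tmC f g)) = cmp (tm (FM f) (FM g)) (Fk k X Y)"
  using Fk_X2[unfolded inX2_def, THEN conjunct2] unfolding Hom_def by auto

definition G where "G k X Y = deformed_Ft C D FO Ft n Fk X Y k"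

lemma G0[simp]: "G 0 X Y = Ft X Y" by (simp add: G_def deformed_Ft_def)
lemma Gk: "1 \<le> k \<Longrightarrow> k \<le> n \<Longrightarrow> G k X Y = Fk k X Y" by (simp add: G_def deformed_Ft_def)
lemma Gbig: "n < k \<Longrightarrow> G k X Y = zr (FO (toC X Y)) (to (FO X) (FO Y))" by (simp add: G_def deformed_Ft_def)

lemma G_hom[intro]: "X \<in> ObC \<Longrightarrow> Y \<in> ObC \<Longrightarrow> G k X Y \<in> H (FO (toC X Y)) (to (FO X) (FO Y))"
  by (cases "k = 0"; cases "k \<le> n") (auto simp: Gk Gbig Fk_hom)

lemma G_nat: "f \<in> HC X X' \<Longrightarrow> g \<in> HC Y Y' \<Longrightarrow>
   cmp (G k X' Y') (FM (tmC f g)) = cmp (tm (FM f) (FM g)) (G k X Y)"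
proof -
  assume f: "f \<in> HC X X'" and g: "g \<in> HC Y Y'"
  have o: "X \<in> ObC" "X' \<in> ObC" "Y \<in> ObC" "Y' \<in> ObC" using f g homC_objs by auto
  show ?thesis
  proof (cases "k = 0")
    case True then show ?thesis using Ft_nat f g by simp
  next
    case False
    show ?thesis
    proof (cases "k \<le> n")
      case True then show ?thesis using False Fk_nat f g by (simp add: Gk)
    next
      case False
      have "FM (tmC f g) \<in> H (FO (toC X Y)) (FO (toC X' Y'))" using f g by blast
      moreover have "tm (FM f) (FM g) \<in> H (to (FO X) (FO Y)) (to (FO X') (FO Y'))" using f g by blast
      ultimately show ?thesis using False o by (simp add: Gbig)
    qed
  qed
qed


abbreviation "T \<equiv> tdef D n"

lemma dF_eq: "deformed_Ft C D FO Ft n Fk X Y = (\<lambda>k. G k X Y)"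
  by (simp add: G_def fun_eq_iff)

lemma G_seq: "X \<in> ObC \<Longrightarrow> Y \<in> ObC \<Longrightarrow> seqH (\<lambda>k. G k X Y) (FO (toC X Y)) (to (FO X) (FO Y))"
  unfolding seqH_def by blast

lemma pdT: "is_monfun C T FO (\<lambda>f. pconst D n (FM f)) (\<lambda>X Y. (\<lambda>k. G k X Y)) (pconst D n F0)"
  using pd[unfolded is_proper_deformation_def, THEN conjunct2] unfolding dF_eq .

lemma hexT: "X \<in> ObC \<Longrightarrow> Y \<in> ObC \<Longrightarrow> Z \<in> ObC \<Longrightarrow>
   cComp T (pconst D n (al (FO X) (FO Y) (FO Z)))
     (cComp T (mTm T (\<lambda>k. G k X Y) (pconst D n (idd (FO Z)))) (\<lambda>k. G k (toC X Y) Z))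
   = cComp T (mTm T (pconst D n (idd (FO X))) (\<lambda>k. G k Y Z))
       (cComp T (\<lambda>k. G k X (toC Y Z)) (pconst D n (FM (alC X Y Z))))"
  using pdT[unfolded is_monfun_def, THEN conjunct2, THEN conjunct2, THEN conjunct2, THEN conjunct2,
     THEN conjunct2, THEN conjunct2, THEN conjunct2, THEN conjunct1] by simp

lemma hex: "X \<in> ObC \<Longrightarrow> Y \<in> ObC \<Longrightarrow> Z \<in> ObC \<Longrightarrow> k \<le> n \<Longrightarrow>
   cmp (al (FO X) (FO Y) (FO Z))
     (ls (FO (toC (toC X Y) Z)) (to (to (FO X) (FO Y)) (FO Z))
        (\<lambda>i. cmp (tm (G i X Y) (idd (FO Z))) (G (k - i) (toC X Y) Z)) (Suc k))
   = ls (FO (toC (toC X Y) Z)) (to (FO X) (to (FO Y) (FO Z)))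
        (\<lambda>i. cmp (tm (idd (FO X)) (G i Y Z)) (cmp (G (k - i) X (toC Y Z)) (FM (alC X Y Z)))) (Suc k)"
proof -
  assume o: "X \<in> ObC" "Y \<in> ObC" "Z \<in> ObC" and k: "k \<le> n"
  define s1 where "s1 = mTm T (\<lambda>k. G k X Y) (pconst D n (idd (FO Z)))"
  define s2 where "s2 = cComp T s1 (\<lambda>k. G k (toC X Y) Z)"
  define r1 where "r1 = cComp T (\<lambda>k. G k X (toC Y Z)) (pconst D n (FM (alC X Y Z)))"
  define r2 where "r2 = mTm T (pconst D n (idd (FO X))) (\<lambda>k. G k Y Z)"
  have s1s: "seqH s1 (to (FO (toC X Y)) (FO Z)) (to (to (FO X) (FO Y)) (FO Z))"
    unfolding s1_def by (rule ttm_seq) (use o in \<open>auto intro!: G_seq pc_seq\<close>)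
  have s1v: "i \<le> n \<Longrightarrow> s1 i = tm (G i X Y) (idd (FO Z))" for i
    unfolding s1_def
    by (rule trans[OF ttm_at[OF G_seq pc_seq] tmconv_pc_r]) (use o in auto)
  have s2s: "seqH s2 (FO (toC (toC X Y) Z)) (to (to (FO X) (FO Y)) (FO Z))"
    unfolding s2_def by (rule tcomp_seq) (use o s1s in \<open>auto intro!: G_seq\<close>)
  have s2v: "s2 k = ls (FO (toC (toC X Y) Z)) (to (to (FO X) (FO Y)) (FO Z))
        (\<lambda>i. cmp (tm (G i X Y) (idd (FO Z))) (G (k - i) (toC X Y) Z)) (Suc k)"
    unfolding s2_def
    by (rule trans[OF tcomp_at[OF G_seq s1s] lsum_cong]) (use o k s1v in auto)
  have r1s: "seqH r1 (FO (toC (toC X Y) Z)) (to (FO X) (FO (toC Y Z)))"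
    unfolding r1_def by (rule tcomp_seq) (use o in \<open>auto intro!: G_seq pc_seq\<close>)
  have r1v: "i \<le> n \<Longrightarrow> r1 i = cmp (G i X (toC Y Z)) (FM (alC X Y Z))" for i
    unfolding r1_def
    by (rule trans[OF tcomp_at[OF pc_seq G_seq] conv_pc_r]) (use o in auto)
  have r2s: "seqH r2 (to (FO X) (FO (toC Y Z))) (to (FO X) (to (FO Y) (FO Z)))"
    unfolding r2_def by (rule ttm_seq) (use o in \<open>auto intro!: G_seq pc_seq\<close>)
  have r2v: "i \<le> n \<Longrightarrow> r2 i = tm (idd (FO X)) (G i Y Z)" for i
    unfolding r2_def
    by (rule trans[OF ttm_at[OF pc_seq G_seq] tmconv_pc_l]) (use o in auto)
  have e: "cComp T (pconst D n (al (FO X) (FO Y) (FO Z))) s2 k = cComp T r2 r1 k"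
    using hexT[OF o] unfolding s1_def s2_def r1_def r2_def by simp
  have "cComp T (pconst D n (al (FO X) (FO Y) (FO Z))) s2 k = cmp (al (FO X) (FO Y) (FO Z)) (s2 k)"
    by (rule trans[OF tcomp_at[OF s2s pc_seq] conv_pc_l]) (use o k s2s in \<open>auto intro: seqH_D\<close>)
  moreover have "cComp T r2 r1 k = ls (FO (toC (toC X Y) Z)) (to (FO X) (to (FO Y) (FO Z)))
        (\<lambda>i. cmp (tm (idd (FO X)) (G i Y Z)) (cmp (G (k - i) X (toC Y Z)) (FM (alC X Y Z)))) (Suc k)"
    by (rule trans[OF tcomp_at[OF r1s r2s] lsum_cong]) (use o k r1v r2v in auto)
  ultimately show ?thesis using e s2v by simp
qed

lemma luT: "X \<in> ObC \<Longrightarrow> pconst D n (FM (mLunit C X))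
   = cComp T (pconst D n (mLunit D (FO X)))
       (cComp T (mTm T (pconst D n F0) (pconst D n (idd (FO X)))) (\<lambda>k. G k IC X))"
  using pdT[unfolded is_monfun_def, THEN conjunct2, THEN conjunct2, THEN conjunct2, THEN conjunct2,
     THEN conjunct2, THEN conjunct2, THEN conjunct2, THEN conjunct2, THEN conjunct1] by simp

lemma ruT: "X \<in> ObC \<Longrightarrow> pconst D n (FM (mRunit C X))
   = cComp T (pconst D n (mRunit D (FO X)))
       (cComp T (mTm T (pconst D n (idd (FO X))) (pconst D n F0)) (\<lambda>k. G k X IC))"
  using pdT[unfolded is_monfun_def, THEN conjunct2, THEN conjunct2, THEN conjunct2, THEN conjunct2,
     THEN conjunct2, THEN conjunct2, THEN conjunct2, THEN conjunct2, THEN conjunct2] by simp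

lemma Fk_lunit: "1 \<le> k \<Longrightarrow> k \<le> n \<Longrightarrow> X \<in> ObC \<Longrightarrow> Fk k IC X = zr (FO (toC IC X)) (to (FO IC) (FO X))"
proof -
  assume k: "1 \<le> k" "k \<le> n" and o: "X \<in> ObC"
  define s1 where "s1 = mTm T (pconst D n F0) (pconst D n (idd (FO X)))"
  define s2 where "s2 = cComp T s1 (\<lambda>k. G k IC X)"
  have s1s: "seqH s1 (to (FO IC) (FO X)) (to (mUnit D) (FO X))"
    unfolding s1_def by (rule ttm_seq) (use o F0_hom in \<open>auto intro!: pc_seq\<close>)
  have s1v: "i \<le> n \<Longrightarrow> s1 i = tm (pconst D n F0 i) (idd (FO X))" for i
    unfolding s1_def
    by (rule trans[OF ttm_at[OF pc_seq pc_seq] tmconv_pc_r]) (use o F0_hom in \<open>auto intro: seqH_D pc_seq\<close>)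
  have s2s: "seqH s2 (FO (toC IC X)) (to (mUnit D) (FO X))"
    unfolding s2_def by (rule tcomp_seq) (use o s1s in \<open>auto intro!: G_seq\<close>)
  have "s2 k = ls (FO (toC IC X)) (to (mUnit D) (FO X))
        (\<lambda>i. cmp (tm (pconst D n F0 i) (idd (FO X))) (G (k - i) IC X)) (Suc k)"
    unfolding s2_def
    by (rule trans[OF tcomp_at[OF G_seq s1s] lsum_cong]) (use o k s1v in auto)
  also have "\<dots> = cmp (tm F0 (idd (FO X))) (G k IC X)"
  proof -
    have "ls (FO (toC IC X)) (to (mUnit D) (FO X))
        (\<lambda>i. cmp (tm (pconst D n F0 i) (idd (FO X))) (G (k - i) IC X)) (Suc k)
      = ls (FO (toC IC X)) (to (mUnit D) (FO X))
        (\<lambda>i. cmp (pconst D n (tm F0 (idd (FO X))) i) (G (k - i) IC X)) (Suc k)"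
    proof (rule lsum_cong)
      fix i
      have h: "tm F0 (idd (FO X)) \<in> H (to (FO IC) (FO X)) (to (mUnit D) (FO X))" using o F0_hom by auto
      show "cmp (tm (pconst D n F0 i) (idd (FO X))) (G (k - i) IC X) =
            cmp (pconst D n (tm F0 (idd (FO X))) i) (G (k - i) IC X)"
        using pcpos[OF h, of i n] pcpos[OF F0_hom, of i n] o F0_hom by (cases "i = 0") (auto intro!: comp_zr_l)
    qed
    also have "\<dots> = cmp (tm F0 (idd (FO X))) (G k IC X)"
      by (rule conv_pc_l) (use o F0_hom in auto)
    finally show ?thesis .
  qed
  finally have s2k: "s2 k = cmp (tm F0 (idd (FO X))) (G k IC X)" .
  have "pconst D n (FM (mLunit C X)) k = cComp T (pconst D n (mLunit D (FO X))) s2 k"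
    using luT[OF o] unfolding s1_def s2_def by simp
  also have "\<dots> = cmp (mLunit D (FO X)) (s2 k)"
    by (rule trans[OF tcomp_at[OF s2s pc_seq] conv_pc_l]) (use o k s2s in \<open>auto intro: seqH_D\<close>)
  finally have "cmp (mLunit D (FO X)) (cmp (tm F0 (idd (FO X))) (G k IC X)) = zr (FO (toC IC X)) (FO X)"
    using k o s2k pcpos[OF FM_hom[OF lunitC_hom[OF o]], of k n] by auto
  then have "cmp (tm F0 (idd (FO X))) (G k IC X) = zr (FO (toC IC X)) (to (mUnit D) (FO X))"
    by (rule iso_cancel[rotated 3]) (use o F0_hom lunit_iso in auto)
  then have "G k IC X = zr (FO (toC IC X)) (to (FO IC) (FO X))"
    by (rule tm_iso_cancel_l[rotated 4]) (use o F0_hom F0_iso in auto)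
  then show ?thesis using k by (simp add: Gk)
qed

lemma Fk_runit: "1 \<le> k \<Longrightarrow> k \<le> n \<Longrightarrow> X \<in> ObC \<Longrightarrow> Fk k X IC = zr (FO (toC X IC)) (to (FO X) (FO IC))"
proof -
  assume k: "1 \<le> k" "k \<le> n" and o: "X \<in> ObC"
  define s1 where "s1 = mTm T (pconst D n (idd (FO X))) (pconst D n F0)"
  define s2 where "s2 = cComp T s1 (\<lambda>k. G k X IC)"
  have s1s: "seqH s1 (to (FO X) (FO IC)) (to (FO X) (mUnit D))"
    unfolding s1_def by (rule ttm_seq) (use o F0_hom in \<open>auto intro!: pc_seq\<close>)
  have s1v: "i \<le> n \<Longrightarrow> s1 i = tm (idd (FO X)) (pconst D n F0 i)" for i
    unfolding s1_def
    by (rule trans[OF ttm_at[OF pc_seq pc_seq] tmconv_pc_l]) (use o F0_hom in \<open>auto intro: seqH_D pc_seq\<close>)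
  have s2s: "seqH s2 (FO (toC X IC)) (to (FO X) (mUnit D))"
    unfolding s2_def by (rule tcomp_seq) (use o s1s in \<open>auto intro!: G_seq\<close>)
  have "s2 k = ls (FO (toC X IC)) (to (FO X) (mUnit D))
        (\<lambda>i. cmp (tm (idd (FO X)) (pconst D n F0 i)) (G (k - i) X IC)) (Suc k)"
    unfolding s2_def
    by (rule trans[OF tcomp_at[OF G_seq s1s] lsum_cong]) (use o k s1v in auto)
  also have "\<dots> = cmp (tm (idd (FO X)) F0) (G k X IC)"
  proof -
    have "ls (FO (toC X IC)) (to (FO X) (mUnit D))
        (\<lambda>i. cmp (tm (idd (FO X)) (pconst D n F0 i)) (G (k - i) X IC)) (Suc k)
      = ls (FO (toC X IC)) (to (FO X) (mUnit D))
        (\<lambda>i. cmp (pconst D n (tm (idd (FO X)) F0) i) (G (k - i) X IC)) (Suc k)"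
    proof (rule lsum_cong)
      fix i
      have h: "tm (idd (FO X)) F0 \<in> H (to (FO X) (FO IC)) (to (FO X) (mUnit D))" using o F0_hom by auto
      show "cmp (tm (idd (FO X)) (pconst D n F0 i)) (G (k - i) X IC) =
            cmp (pconst D n (tm (idd (FO X)) F0) i) (G (k - i) X IC)"
        using pcpos[OF h, of i n] pcpos[OF F0_hom, of i n] o F0_hom by (cases "i = 0") (auto intro!: comp_zr_l)
    qed
    also have "\<dots> = cmp (tm (idd (FO X)) F0) (G k X IC)"
      by (rule conv_pc_l) (use o F0_hom in auto)
    finally show ?thesis .
  qed
  finally have s2k: "s2 k = cmp (tm (idd (FO X)) F0) (G k X IC)" .
  have "pconst D n (FM (mRunit C X)) k = cComp T (pconst D n (mRunit D (FO X))) s2 k"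
    using ruT[OF o] unfolding s1_def s2_def by simp
  also have "\<dots> = cmp (mRunit D (FO X)) (s2 k)"
    by (rule trans[OF tcomp_at[OF s2s pc_seq] conv_pc_l]) (use o k s2s in \<open>auto intro: seqH_D\<close>)
  finally have "cmp (mRunit D (FO X)) (cmp (tm (idd (FO X)) F0) (G k X IC)) = zr (FO (toC X IC)) (FO X)"
    using k o s2k pcpos[OF FM_hom[OF runitC_hom[OF o]], of k n] by auto
  then have "cmp (tm (idd (FO X)) F0) (G k X IC) = zr (FO (toC X IC)) (to (FO X) (mUnit D))"
    by (rule iso_cancel[rotated 3]) (use o F0_hom runit_iso in auto)
  then have "G k X IC = zr (FO (toC X IC)) (to (FO X) (FO IC))"
    by (rule tm_iso_cancel_r[rotated 4]) (use o F0_hom F0_iso in auto)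
  then show ?thesis using k by (simp add: Gk)
qed

lemma part1: "\<forall>k\<in>{1..n}. inC2 C D FO FM (Fk k)"
  unfolding inC2_def using Fk_X2 Fk_lunit Fk_runit by auto

end


context Main begin

abbreviation "arrC \<equiv> cArr C"
lemma arrC_hom: "f \<in> arrC \<Longrightarrow> f \<in> HC (cDom C f) (cCod C f)" by (simp add: Hom_def)
lemma homC_arr: "f \<in> HC X Y \<Longrightarrow> f \<in> arrC" by (simp add: Hom_def)
lemma homC_dom: "f \<in> HC X Y \<Longrightarrow> cDom C f = X" by (simp add: Hom_def)
lemma homC_cod: "f \<in> HC X Y \<Longrightarrow> cCod C f = Y" by (simp add: Hom_def)

lemma domC_ob[simp]: "f \<in> arrC \<Longrightarrow> cDom C f \<in> ObC" using homC_objs[OF arrC_hom] by blast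
lemma codC_ob[simp]: "f \<in> arrC \<Longrightarrow> cCod C f \<in> ObC" using homC_objs[OF arrC_hom] by blast
lemma arrC_tm[simp]: "f \<in> arrC \<Longrightarrow> g \<in> arrC \<Longrightarrow> tmC f g \<in> arrC"
  by (rule homC_arr[OF tmC_hom[OF arrC_hom[of f] arrC_hom[of g]]])
lemma domC_tm[simp]: "f \<in> arrC \<Longrightarrow> g \<in> arrC \<Longrightarrow> cDom C (tmC f g) = toC (cDom C f) (cDom C g)"
  by (rule homC_dom[OF tmC_hom[OF arrC_hom[of f] arrC_hom[of g]]])
lemma codC_tm[simp]: "f \<in> arrC \<Longrightarrow> g \<in> arrC \<Longrightarrow> cCod C (tmC f g) = toC (cCod C f) (cCod C g)"
  by (rule homC_cod[OF tmC_hom[OF arrC_hom[of f] arrC_hom[of g]]])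
lemma arrC_id[simp]: "X \<in> ObC \<Longrightarrow> cId C X \<in> arrC" by (rule homC_arr[OF idC_hom])
lemma domC_id[simp]: "X \<in> ObC \<Longrightarrow> cDom C (cId C X) = X" by (rule homC_dom[OF idC_hom])
lemma codC_id[simp]: "X \<in> ObC \<Longrightarrow> cCod C (cId C X) = X" by (rule homC_cod[OF idC_hom])
lemma arrC_al[simp]: "X \<in> ObC \<Longrightarrow> Y \<in> ObC \<Longrightarrow> Z \<in> ObC \<Longrightarrow> alC X Y Z \<in> arrC" by (rule homC_arr[OF alC_hom])
lemma domC_al[simp]: "X \<in> ObC \<Longrightarrow> Y \<in> ObC \<Longrightarrow> Z \<in> ObC \<Longrightarrow> cDom C (alC X Y Z) = toC (toC X Y) Z" by (rule homC_dom[OF alC_hom])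
lemma codC_al[simp]: "X \<in> ObC \<Longrightarrow> Y \<in> ObC \<Longrightarrow> Z \<in> ObC \<Longrightarrow> cCod C (alC X Y Z) = toC X (toC Y Z)" by (rule homC_cod[OF alC_hom])
lemma arrC_comp[simp]: "f \<in> arrC \<Longrightarrow> g \<in> arrC \<Longrightarrow> cCod C f = cDom C g \<Longrightarrow> cmpC g f \<in> arrC"
  using compC_hom[OF arrC_hom[of f]] arrC_hom[of g] by (metis homC_arr)
lemma domC_comp[simp]: "f \<in> arrC \<Longrightarrow> g \<in> arrC \<Longrightarrow> cCod C f = cDom C g \<Longrightarrow> cDom C (cmpC g f) = cDom C f"
  using compC_hom[OF arrC_hom[of f]] arrC_hom[of g] by (metis homC_dom)
lemma codC_comp[simp]: "f \<in> arrC \<Longrightarrow> g \<in> arrC \<Longrightarrow> cCod C f = cDom C g \<Longrightarrow> cCod C (cmpC g f) = cCod C g"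
  using compC_hom[OF arrC_hom[of f]] arrC_hom[of g] by (metis homC_cod)

lemma arr_FM[simp]: "f \<in> arrC \<Longrightarrow> FM f \<in> arr" by (rule hom_arr[OF FM_hom[OF arrC_hom]])
lemma dom_FM[simp]: "f \<in> arrC \<Longrightarrow> dm (FM f) = FO (cDom C f)" by (rule hom_dom[OF FM_hom[OF arrC_hom]])
lemma cod_FM[simp]: "f \<in> arrC \<Longrightarrow> cd (FM f) = FO (cCod C f)" by (rule hom_cod[OF FM_hom[OF arrC_hom]])
lemma arr_G[simp]: "X \<in> ObC \<Longrightarrow> Y \<in> ObC \<Longrightarrow> G k X Y \<in> arr" by (rule hom_arr[OF G_hom])
lemma dom_G[simp]: "X \<in> ObC \<Longrightarrow> Y \<in> ObC \<Longrightarrow> dm (G k X Y) = FO (toC X Y)" by (rule hom_dom[OF G_hom])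
lemma cod_G[simp]: "X \<in> ObC \<Longrightarrow> Y \<in> ObC \<Longrightarrow> cd (G k X Y) = to (FO X) (FO Y)" by (rule hom_cod[OF G_hom])

lemma FM_comp_a: "f \<in> arrC \<Longrightarrow> g \<in> arrC \<Longrightarrow> cCod C f = cDom C g \<Longrightarrow> FM (cmpC g f) = cmp (FM g) (FM f)"
  using FM_comp[OF arrC_hom[of f]] arrC_hom[of g] by metis

lemma G_nat_a: "f \<in> arrC \<Longrightarrow> g \<in> arrC \<Longrightarrow> cCod C f = X' \<Longrightarrow> cCod C g = Y' \<Longrightarrow>
  cmp (G k X' Y') (FM (tmC f g)) = cmp (tm (FM f) (FM g)) (G k (cDom C f) (cDom C g))"
  using G_nat[OF arrC_hom[of f] arrC_hom[of g]] by blast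
lemma G_nat_t: "f \<in> arrC \<Longrightarrow> g \<in> arrC \<Longrightarrow> cCod C f = X' \<Longrightarrow> cCod C g = Y' \<Longrightarrow> r \<in> arr \<Longrightarrow>
  cd r = FO (toC (cDom C f) (cDom C g)) \<Longrightarrow>
  cmp (G k X' Y') (cmp (FM (tmC f g)) r) = cmp (tm (FM f) (FM g)) (cmp (G k (cDom C f) (cDom C g)) r)"
proof -
  assume a: "f \<in> arrC" "g \<in> arrC" "cCod C f = X'" "cCod C g = Y'" "r \<in> arr" "cd r = FO (toC (cDom C f) (cDom C g))"
  have o: "X' \<in> ObC" "Y' \<in> ObC" using a codC_ob by auto
  have "cmp (G k X' Y') (cmp (FM (tmC f g)) r) = cmp (cmp (G k X' Y') (FM (tmC f g))) r"
    by (rule assocR[symmetric]) (use a o in auto)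
  also have "\<dots> = cmp (cmp (tm (FM f) (FM g)) (G k (cDom C f) (cDom C g))) r" using G_nat_a a by simp
  also have "\<dots> = cmp (tm (FM f) (FM g)) (cmp (G k (cDom C f) (cDom C g)) r)"
    by (rule assocR) (use a o in auto)
  finally show ?thesis .
qed

definition hP where "hP b c X Y Z = cmp (al (FO X) (FO Y) (FO Z)) (cmp (tm (G b X Y) (idd (FO Z))) (G c (toC X Y) Z))"
definition hQ where "hQ b c X Y Z = cmp (tm (idd (FO X)) (G b Y Z)) (cmp (G c X (toC Y Z)) (FM (alC X Y Z)))"

definition L1 where "L1 a A B E W x = cmp (tm (idd (FO A)) x) (cmp (G a A (toC (toC B E) W)) (cmp (FM (alC A (toC B E) W)) (FM (tmC (alC A B E) (cId C W)))))"
definition L2 where "L2 a A B E W x = cmp (al (FO A) (FO B) (to (FO E) (FO W))) (cmp (tm (G a A B) (idd (to (FO E) (FO W)))) x)"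
definition L3 where "L3 a A B E W x = cmp (tm (idd (FO A)) (cmp (al (FO B) (FO E) (FO W)) (tm (G a B E) (idd (FO W))))) (cmp x (FM (tmC (alC A B E) (cId C W))))"
definition L4 where "L4 a A B E W x = cmp (tm (idd (FO A)) (tm (idd (FO B)) (G a E W))) (cmp x (FM (alC (toC A B) E W)))"
definition L5 where "L5 a A B E W x = cmp (tm (idd (FO A)) (al (FO B) (FO E) (FO W))) (cmp (al (FO A) (to (FO B) (FO E)) (FO W)) (cmp (tm x (idd (FO W))) (G a (toC (toC A B) E) W)))"

lemma delta3_L: "delta3 C D FO FM (G a) \<phi> A B E W =
  add (add (add (add (L1 a A B E W (\<phi> B E W)) (ng (L2 a A B E W (\<phi> (toC A B) E W))))
     (L3 a A B E W (\<phi> A (toC B E) W))) (ng (L4 a A B E W (\<phi> A B (toC E W))))) (L5 a A B E W (\<phi> A B E))"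
  unfolding delta3_def Let_def L1_def L2_def L3_def L4_def L5_def ..

lemma id1: "A \<in> ObC \<Longrightarrow> B \<in> ObC \<Longrightarrow> E \<in> ObC \<Longrightarrow> W \<in> ObC \<Longrightarrow>
   L1 a A B E W (hP b c B E W) = L3 b A B E W (hQ c a A (toC B E) W)"
  unfolding L1_def L3_def hP_def hQ_def by (simp add: norm)


lemma G_nat_g: "f \<in> arrC \<Longrightarrow> g \<in> arrC \<Longrightarrow> cDom C f = X \<Longrightarrow> cDom C g = Y \<Longrightarrow> cCod C f = X' \<Longrightarrow> cCod C g = Y' \<Longrightarrow>
  r \<in> arr \<Longrightarrow> cd r = FO (toC X Y) \<Longrightarrow>
  cmp (tm (FM f) (FM g)) (cmp (G k X Y) r) = cmp (G k X' Y') (cmp (FM (tmC f g)) r)"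
  using G_nat_t by simp

lemma FM_pent: "A \<in> ObC \<Longrightarrow> B \<in> ObC \<Longrightarrow> E \<in> ObC \<Longrightarrow> W \<in> ObC \<Longrightarrow>
  cmp (FM (tmC (cId C A) (alC B E W))) (cmp (FM (alC A (toC B E) W)) (FM (tmC (alC A B E) (cId C W))))
  = cmp (FM (alC A B (toC E W))) (FM (alC (toC A B) E W))"
proof -
  assume o: "A \<in> ObC" "B \<in> ObC" "E \<in> ObC" "W \<in> ObC"
  have "cmp (FM (tmC (cId C A) (alC B E W))) (cmp (FM (alC A (toC B E) W)) (FM (tmC (alC A B E) (cId C W))))
     = FM (cmpC (tmC (cId C A) (alC B E W)) (cmpC (alC A (toC B E) W) (tmC (alC A B E) (cId C W))))"
    using o by (simp add: FM_comp_a)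
  also have "\<dots> = FM (cmpC (alC A B (toC E W)) (alC (toC A B) E W))" using pentagonC o by simp
  also have "\<dots> = cmp (FM (alC A B (toC E W))) (FM (alC (toC A B) E W))" using o by (simp add: FM_comp_a)
  finally show ?thesis .
qed

lemma id2: "A \<in> ObC \<Longrightarrow> B \<in> ObC \<Longrightarrow> E \<in> ObC \<Longrightarrow> W \<in> ObC \<Longrightarrow>
   L2 a A B E W (hQ b c (toC A B) E W) = L4 b A B E W (hP a c A B (toC E W))"
  unfolding L2_def L4_def hP_def hQ_def by (simp add: norm al_nat_s)

lemma id3: "A \<in> ObC \<Longrightarrow> B \<in> ObC \<Longrightarrow> E \<in> ObC \<Longrightarrow> W \<in> ObC \<Longrightarrow>
   L3 a A B E W (hP b c A (toC B E) W) = L5 c A B E W (hQ a b A B E)"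
proof -
  assume o: "A \<in> ObC" "B \<in> ObC" "E \<in> ObC" "W \<in> ObC"
  define R where "R = cmp (tm (cmp (G b A (toC B E)) (FM (alC A B E))) (idd (FO W))) (G c (toC (toC A B) E) W)"
  have R: "R \<in> arr" "cd R = to (to (FO A) (FO (toC B E))) (FO W)" unfolding R_def using o by simp_all
  have "L3 a A B E W (hP b c A (toC B E) W) =
     cmp (tm (idd (FO A)) (al (FO B) (FO E) (FO W))) (cmp (tm (idd (FO A)) (tm (G a B E) (idd (FO W))))
       (cmp (al (FO A) (FO (toC B E)) (FO W)) R))"
    unfolding L3_def hP_def R_def using o by (simp add: norm G_nat_a)
  also have "cmp (tm (idd (FO A)) (tm (G a B E) (idd (FO W)))) (cmp (al (FO A) (FO (toC B E)) (FO W)) R)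
     = cmp (al (FO A) (to (FO B) (FO E)) (FO W)) (cmp (tm (tm (idd (FO A)) (G a B E)) (idd (FO W))) R)"
    by (rule al_nat_g[symmetric]) (use o R in simp_all)
  also have "cmp (tm (idd (FO A)) (al (FO B) (FO E) (FO W)))
      (cmp (al (FO A) (to (FO B) (FO E)) (FO W)) (cmp (tm (tm (idd (FO A)) (G a B E)) (idd (FO W))) R))
      = L5 c A B E W (hQ a b A B E)"
    unfolding L5_def hQ_def R_def using o by (simp add: norm)
  finally show ?thesis .
qed

lemma id4: "A \<in> ObC \<Longrightarrow> B \<in> ObC \<Longrightarrow> E \<in> ObC \<Longrightarrow> W \<in> ObC \<Longrightarrow>
   L5 a A B E W (hP b c A B E) = L2 b A B E W (hP c a (toC A B) E W)"
proof -
  assume o: "A \<in> ObC" "B \<in> ObC" "E \<in> ObC" "W \<in> ObC"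
  define R2 where "R2 = cmp (tm (G c (toC A B) E) (idd (FO W))) (G a (toC (toC A B) E) W)"
  have R2: "R2 \<in> arr" "cd R2 = to (to (FO (toC A B)) (FO E)) (FO W)" unfolding R2_def using o by simp_all
  define R where "R = cmp (tm (tm (G b A B) (idd (FO E))) (idd (FO W))) R2"
  have R: "R \<in> arr" "cd R = to (to (to (FO A) (FO B)) (FO E)) (FO W)" unfolding R_def using o R2 by simp_all
  have "L5 a A B E W (hP b c A B E) =
     cmp (tm (idd (FO A)) (al (FO B) (FO E) (FO W))) (cmp (al (FO A) (to (FO B) (FO E)) (FO W))
       (cmp (tm (al (FO A) (FO B) (FO E)) (idd (FO W))) R))"
    unfolding L5_def hP_def R_def R2_def using o by (simp add: norm)
  also have "\<dots> = cmp (al (FO A) (FO B) (to (FO E) (FO W))) (cmp (al (to (FO A) (FO B)) (FO E) (FO W)) R)"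
    by (rule pentagon_t) (use o R in simp_all)
  also have "cmp (al (to (FO A) (FO B)) (FO E) (FO W)) R
     = cmp (tm (G b A B) (tm (idd (FO E)) (idd (FO W)))) (cmp (al (FO (toC A B)) (FO E) (FO W)) R2)"
    unfolding R_def by (rule al_nat_g) (use o R2 in simp_all)
  also have "cmp (al (FO A) (FO B) (to (FO E) (FO W)))
      (cmp (tm (G b A B) (tm (idd (FO E)) (idd (FO W)))) (cmp (al (FO (toC A B)) (FO E) (FO W)) R2))
      = L2 b A B E W (hP c a (toC A B) E W)"
    unfolding L2_def hP_def R2_def using o by (simp add: norm)
  finally show ?thesis .
qed

lemma id5: "A \<in> ObC \<Longrightarrow> B \<in> ObC \<Longrightarrow> E \<in> ObC \<Longrightarrow> W \<in> ObC \<Longrightarrow>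
   L1 a A B E W (hQ b c B E W) = L4 b A B E W (hQ c a A B (toC E W))"
proof -
  assume o: "A \<in> ObC" "B \<in> ObC" "E \<in> ObC" "W \<in> ObC"
  define R where "R = cmp (FM (alC A (toC B E) W)) (FM (tmC (alC A B E) (cId C W)))"
  have R: "R \<in> arr" "cd R = FO (toC A (toC (toC B E) W))" unfolding R_def using o by simp_all
  have "L1 a A B E W (hQ b c B E W) =
     cmp (tm (idd (FO A)) (cmp (tm (idd (FO B)) (G b E W)) (G c B (toC E W))))
       (cmp (tm (FM (cId C A)) (FM (alC B E W))) (cmp (G a A (toC (toC B E) W)) R))"
    unfolding L1_def hQ_def R_def using o by (simp add: norm)
  also have "cmp (tm (FM (cId C A)) (FM (alC B E W))) (cmp (G a A (toC (toC B E) W)) R)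
     = cmp (G a A (toC B (toC E W))) (cmp (FM (tmC (cId C A) (alC B E W))) R)"
    by (rule G_nat_g) (use o R in simp_all)
  also have "cmp (FM (tmC (cId C A) (alC B E W))) R = cmp (FM (alC A B (toC E W))) (FM (alC (toC A B) E W))"
    unfolding R_def by (rule FM_pent[OF o])
  also have "cmp (tm (idd (FO A)) (cmp (tm (idd (FO B)) (G b E W)) (G c B (toC E W))))
      (cmp (G a A (toC B (toC E W))) (cmp (FM (alC A B (toC E W))) (FM (alC (toC A B) E W))))
      = L4 b A B E W (hQ c a A B (toC E W))"
    unfolding L4_def hQ_def using o by (simp add: norm)
  finally show ?thesis .
qed


lemma arrH: "f \<in> arr \<Longrightarrow> dm f = X \<Longrightarrow> cd f = Y \<Longrightarrow> f \<in> H X Y" using arr_hom by blast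

abbreviation "S4 A B E W \<equiv> FO (toC (toC (toC A B) E) W)"
abbreviation "T4 A B E W \<equiv> to (FO A) (to (FO B) (to (FO E) (FO W)))"

lemma L1_add: "A \<in> ObC \<Longrightarrow> B \<in> ObC \<Longrightarrow> E \<in> ObC \<Longrightarrow> W \<in> ObC \<Longrightarrow>
  addmap (L1 a A B E W) (FO (toC (toC B E) W)) (to (FO B) (to (FO E) (FO W))) (S4 A B E W) (T4 A B E W)"
proof -
  assume o: "A \<in> ObC" "B \<in> ObC" "E \<in> ObC" "W \<in> ObC"
  define R where "R = cmp (G a A (toC (toC B E) W)) (cmp (FM (alC A (toC B E) W)) (FM (tmC (alC A B E) (cId C W))))"
  have R: "R \<in> H (S4 A B E W) (to (FO A) (FO (toC (toC B E) W)))" unfolding R_def by (rule arrH) (use o in simp_all)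
  have "addmap (\<lambda>x. cmp (tm (idd (FO A)) x) R) (FO (toC (toC B E) W)) (to (FO B) (to (FO E) (FO W))) (S4 A B E W) (T4 A B E W)"
    by (rule addmap_comp[OF addmap_tmR[OF id_hom] addmap_cmpR[OF R]]) (use o in simp_all)
  then show ?thesis unfolding L1_def R_def by simp
qed

lemma L2_add: "A \<in> ObC \<Longrightarrow> B \<in> ObC \<Longrightarrow> E \<in> ObC \<Longrightarrow> W \<in> ObC \<Longrightarrow>
  addmap (L2 a A B E W) (S4 A B E W) (to (FO (toC A B)) (to (FO E) (FO W))) (S4 A B E W) (T4 A B E W)"
proof -
  assume o: "A \<in> ObC" "B \<in> ObC" "E \<in> ObC" "W \<in> ObC"
  have g: "tm (G a A B) (idd (to (FO E) (FO W))) \<in> H (to (FO (toC A B)) (to (FO E) (FO W))) (to (to (FO A) (FO B)) (to (FO E) (FO W)))"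
    by (rule arrH) (use o in simp_all)
  have h: "al (FO A) (FO B) (to (FO E) (FO W)) \<in> H (to (to (FO A) (FO B)) (to (FO E) (FO W))) (T4 A B E W)"
    by (rule arrH) (use o in simp_all)
  have "addmap (\<lambda>x. cmp (al (FO A) (FO B) (to (FO E) (FO W))) (cmp (tm (G a A B) (idd (to (FO E) (FO W)))) x))
     (S4 A B E W) (to (FO (toC A B)) (to (FO E) (FO W))) (S4 A B E W) (T4 A B E W)"
    by (rule addmap_comp[OF addmap_cmpL[OF g] addmap_cmpL[OF h]]) (use o in simp_all)
  then show ?thesis unfolding L2_def by simp
qed

lemma L3_add: "A \<in> ObC \<Longrightarrow> B \<in> ObC \<Longrightarrow> E \<in> ObC \<Longrightarrow> W \<in> ObC \<Longrightarrow>
  addmap (L3 a A B E W) (FO (toC (toC A (toC B E)) W)) (to (FO A) (to (FO (toC B E)) (FO W))) (S4 A B E W) (T4 A B E W)"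
proof -
  assume o: "A \<in> ObC" "B \<in> ObC" "E \<in> ObC" "W \<in> ObC"
  have r: "FM (tmC (alC A B E) (cId C W)) \<in> H (S4 A B E W) (FO (toC (toC A (toC B E)) W))"
    by (rule arrH) (use o in simp_all)
  have h: "tm (idd (FO A)) (cmp (al (FO B) (FO E) (FO W)) (tm (G a B E) (idd (FO W))))
      \<in> H (to (FO A) (to (FO (toC B E)) (FO W))) (T4 A B E W)"
    by (rule arrH) (use o in simp_all)
  have "addmap (\<lambda>x. cmp (tm (idd (FO A)) (cmp (al (FO B) (FO E) (FO W)) (tm (G a B E) (idd (FO W))))) (cmp x (FM (tmC (alC A B E) (cId C W)))))
     (FO (toC (toC A (toC B E)) W)) (to (FO A) (to (FO (toC B E)) (FO W))) (S4 A B E W) (T4 A B E W)"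
    by (rule addmap_comp[OF addmap_cmpR[OF r] addmap_cmpL[OF h]]) (use o in simp_all)
  then show ?thesis unfolding L3_def by simp
qed

lemma L4_add: "A \<in> ObC \<Longrightarrow> B \<in> ObC \<Longrightarrow> E \<in> ObC \<Longrightarrow> W \<in> ObC \<Longrightarrow>
  addmap (L4 a A B E W) (FO (toC (toC A B) (toC E W))) (to (FO A) (to (FO B) (FO (toC E W)))) (S4 A B E W) (T4 A B E W)"
proof -
  assume o: "A \<in> ObC" "B \<in> ObC" "E \<in> ObC" "W \<in> ObC"
  have r: "FM (alC (toC A B) E W) \<in> H (S4 A B E W) (FO (toC (toC A B) (toC E W)))"
    by (rule arrH) (use o in simp_all)
  have h: "tm (idd (FO A)) (tm (idd (FO B)) (G a E W)) \<in> H (to (FO A) (to (FO B) (FO (toC E W)))) (T4 A B E W)"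
    by (rule arrH) (use o in simp_all)
  have "addmap (\<lambda>x. cmp (tm (idd (FO A)) (tm (idd (FO B)) (G a E W))) (cmp x (FM (alC (toC A B) E W))))
     (FO (toC (toC A B) (toC E W))) (to (FO A) (to (FO B) (FO (toC E W)))) (S4 A B E W) (T4 A B E W)"
    by (rule addmap_comp[OF addmap_cmpR[OF r] addmap_cmpL[OF h]]) (use o in simp_all)
  then show ?thesis unfolding L4_def by simp
qed

lemma L5_add: "A \<in> ObC \<Longrightarrow> B \<in> ObC \<Longrightarrow> E \<in> ObC \<Longrightarrow> W \<in> ObC \<Longrightarrow>
  addmap (L5 a A B E W) (FO (toC (toC A B) E)) (to (FO A) (to (FO B) (FO E))) (S4 A B E W) (T4 A B E W)"
proof -
  assume o: "A \<in> ObC" "B \<in> ObC" "E \<in> ObC" "W \<in> ObC"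
  have r: "G a (toC (toC A B) E) W \<in> H (S4 A B E W) (to (FO (toC (toC A B) E)) (FO W))"
    by (rule arrH) (use o in simp_all)
  have h1: "al (FO A) (to (FO B) (FO E)) (FO W) \<in> H (to (to (FO A) (to (FO B) (FO E))) (FO W)) (to (FO A) (to (to (FO B) (FO E)) (FO W)))"
    by (rule arrH) (use o in simp_all)
  have h2: "tm (idd (FO A)) (al (FO B) (FO E) (FO W)) \<in> H (to (FO A) (to (to (FO B) (FO E)) (FO W))) (T4 A B E W)"
    by (rule arrH) (use o in simp_all)
  have a1: "addmap (\<lambda>x. cmp (tm x (idd (FO W))) (G a (toC (toC A B) E) W)) (FO (toC (toC A B) E)) (to (FO A) (to (FO B) (FO E)))
     (S4 A B E W) (to (to (FO A) (to (FO B) (FO E))) (FO W))"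
    by (rule addmap_comp[OF addmap_tmL[OF id_hom] addmap_cmpR[OF r]]) (use o in simp_all)
  have "addmap (\<lambda>x. cmp (tm (idd (FO A)) (al (FO B) (FO E) (FO W))) (cmp (al (FO A) (to (FO B) (FO E)) (FO W)) (cmp (tm x (idd (FO W))) (G a (toC (toC A B) E) W))))
     (FO (toC (toC A B) E)) (to (FO A) (to (FO B) (FO E))) (S4 A B E W) (T4 A B E W)"
    by (rule addmap_comp[OF addmap_comp[OF a1 addmap_cmpL[OF h1]] addmap_cmpL[OF h2]]) (use o in simp_all)
  then show ?thesis unfolding L5_def by simp
qed

end


context Main begin

lemma hP_hom[simp]: "X \<in> ObC \<Longrightarrow> Y \<in> ObC \<Longrightarrow> Z \<in> ObC \<Longrightarrow>
  hP b c X Y Z \<in> H (FO (toC (toC X Y) Z)) (to (FO X) (to (FO Y) (FO Z)))"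
  unfolding hP_def by (rule arrH) simp_all
lemma hQ_hom[simp]: "X \<in> ObC \<Longrightarrow> Y \<in> ObC \<Longrightarrow> Z \<in> ObC \<Longrightarrow>
  hQ b c X Y Z \<in> H (FO (toC (toC X Y) Z)) (to (FO X) (to (FO Y) (FO Z)))"
  unfolding hQ_def by (rule arrH) simp_all

lemma L1_hom[simp]: "A \<in> ObC \<Longrightarrow> B \<in> ObC \<Longrightarrow> E \<in> ObC \<Longrightarrow> W \<in> ObC \<Longrightarrow>
  x \<in> H (FO (toC (toC B E) W)) (to (FO B) (to (FO E) (FO W))) \<Longrightarrow> L1 a A B E W x \<in> H (S4 A B E W) (T4 A B E W)"
  using addmap_hom[OF L1_add] by blast
lemma L2_hom[simp]: "A \<in> ObC \<Longrightarrow> B \<in> ObC \<Longrightarrow> E \<in> ObC \<Longrightarrow> W \<in> ObC \<Longrightarrow>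
  x \<in> H (S4 A B E W) (to (FO (toC A B)) (to (FO E) (FO W))) \<Longrightarrow> L2 a A B E W x \<in> H (S4 A B E W) (T4 A B E W)"
  using addmap_hom[OF L2_add] by blast
lemma L3_hom[simp]: "A \<in> ObC \<Longrightarrow> B \<in> ObC \<Longrightarrow> E \<in> ObC \<Longrightarrow> W \<in> ObC \<Longrightarrow>
  x \<in> H (FO (toC (toC A (toC B E)) W)) (to (FO A) (to (FO (toC B E)) (FO W))) \<Longrightarrow> L3 a A B E W x \<in> H (S4 A B E W) (T4 A B E W)"
  using addmap_hom[OF L3_add] by blast
lemma L4_hom[simp]: "A \<in> ObC \<Longrightarrow> B \<in> ObC \<Longrightarrow> E \<in> ObC \<Longrightarrow> W \<in> ObC \<Longrightarrow>
  x \<in> H (FO (toC (toC A B) (toC E W))) (to (FO A) (to (FO B) (FO (toC E W)))) \<Longrightarrow> L4 a A B E W x \<in> H (S4 A B E W) (T4 A B E W)"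
  using addmap_hom[OF L4_add] by blast
lemma L5_hom[simp]: "A \<in> ObC \<Longrightarrow> B \<in> ObC \<Longrightarrow> E \<in> ObC \<Longrightarrow> W \<in> ObC \<Longrightarrow>
  x \<in> H (FO (toC (toC A B) E)) (to (FO A) (to (FO B) (FO E))) \<Longrightarrow> L5 a A B E W x \<in> H (S4 A B E W) (T4 A B E W)"
  using addmap_hom[OF L5_add] by blast

definition Hh where "Hh m X Y Z = ls (FO (toC (toC X Y) Z)) (to (FO X) (to (FO Y) (FO Z)))
   (\<lambda>b. add (hP b (m - b) X Y Z) (ng (hQ b (m - b) X Y Z))) (Suc m)"

lemma Hh_hom: "X \<in> ObC \<Longrightarrow> Y \<in> ObC \<Longrightarrow> Z \<in> ObC \<Longrightarrow>
  Hh m X Y Z \<in> H (FO (toC (toC X Y) Z)) (to (FO X) (to (FO Y) (FO Z)))"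
  unfolding Hh_def by (rule lsum_hom) simp_all

lemma Hh_zero: "X \<in> ObC \<Longrightarrow> Y \<in> ObC \<Longrightarrow> Z \<in> ObC \<Longrightarrow> m \<le> n \<Longrightarrow>
  Hh m X Y Z = zr (FO (toC (toC X Y) Z)) (to (FO X) (to (FO Y) (FO Z)))"
proof -
  assume o: "X \<in> ObC" "Y \<in> ObC" "Z \<in> ObC" and m: "m \<le> n"
  let ?S = "FO (toC (toC X Y) Z)" and ?T = "to (FO X) (to (FO Y) (FO Z))"
  have "Hh m X Y Z = add (ls ?S ?T (\<lambda>b. hP b (m - b) X Y Z) (Suc m)) (ng (ls ?S ?T (\<lambda>b. hQ b (m - b) X Y Z) (Suc m)))"
    unfolding Hh_def using o by (simp add: lsum_add lsum_ng del: lsum.simps)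
  also have "ls ?S ?T (\<lambda>b. hP b (m - b) X Y Z) (Suc m) = ls ?S ?T (\<lambda>b. hQ b (m - b) X Y Z) (Suc m)"
  proof -
    have "ls ?S ?T (\<lambda>b. hP b (m - b) X Y Z) (Suc m) = cmp (al (FO X) (FO Y) (FO Z))
       (ls ?S (to (to (FO X) (FO Y)) (FO Z)) (\<lambda>i. cmp (tm (G i X Y) (idd (FO Z))) (G (m - i) (toC X Y) Z)) (Suc m))"
      unfolding hP_def by (rule comp_lsum_l[symmetric]) (use o in \<open>auto intro!: arrH\<close>)
    also have "\<dots> = ls ?S ?T (\<lambda>b. hQ b (m - b) X Y Z) (Suc m)" unfolding hQ_def by (rule hex[OF o m])
    finally show ?thesis .
  qed
  finally show ?thesis using o by (simp del: lsum.simps add: lsum_hom)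
qed

definition Wt where "Wt A B E W a b c =
  add (add (add (add
   (add (L1 a A B E W (hP b c B E W)) (ng (L1 a A B E W (hQ b c B E W))))
   (ng (add (L2 a A B E W (hP b c (toC A B) E W)) (ng (L2 a A B E W (hQ b c (toC A B) E W))))))
   (add (L3 a A B E W (hP b c A (toC B E) W)) (ng (L3 a A B E W (hQ b c A (toC B E) W)))))
   (ng (add (L4 a A B E W (hP b c A B (toC E W))) (ng (L4 a A B E W (hQ b c A B (toC E W)))))))
   (add (L5 a A B E W (hP b c A B E)) (ng (L5 a A B E W (hQ b c A B E))))"

lemma Wt_hom[simp]: "A \<in> ObC \<Longrightarrow> B \<in> ObC \<Longrightarrow> E \<in> ObC \<Longrightarrow> W \<in> ObC \<Longrightarrow> Wt A B E W a b c \<in> H (S4 A B E W) (T4 A B E W)"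
  unfolding Wt_def by simp

lemma delta3_Hh: "A \<in> ObC \<Longrightarrow> B \<in> ObC \<Longrightarrow> E \<in> ObC \<Longrightarrow> W \<in> ObC \<Longrightarrow>
  delta3 C D FO FM (G a) (Hh m) A B E W = ls (S4 A B E W) (T4 A B E W) (\<lambda>b. Wt A B E W a b (m - b)) (Suc m)"
proof -
  assume o: "A \<in> ObC" "B \<in> ObC" "E \<in> ObC" "W \<in> ObC"
  have e1: "L1 a A B E W (Hh m B E W) = ls (S4 A B E W) (T4 A B E W)
      (\<lambda>b. add (L1 a A B E W (hP b (m - b) B E W)) (ng (L1 a A B E W (hQ b (m - b) B E W)))) (Suc m)"
    unfolding Hh_def by (rule addmap_pn[OF L1_add[OF o]]) (use o in simp_all)
  have e2: "L2 a A B E W (Hh m (toC A B) E W) = ls (S4 A B E W) (T4 A B E W)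
      (\<lambda>b. add (L2 a A B E W (hP b (m - b) (toC A B) E W)) (ng (L2 a A B E W (hQ b (m - b) (toC A B) E W)))) (Suc m)"
    unfolding Hh_def by (rule addmap_pn[OF L2_add[OF o]]) (use o in simp_all)
  have e3: "L3 a A B E W (Hh m A (toC B E) W) = ls (S4 A B E W) (T4 A B E W)
      (\<lambda>b. add (L3 a A B E W (hP b (m - b) A (toC B E) W)) (ng (L3 a A B E W (hQ b (m - b) A (toC B E) W)))) (Suc m)"
    unfolding Hh_def by (rule addmap_pn[OF L3_add[OF o]]) (use o in simp_all)
  have e4: "L4 a A B E W (Hh m A B (toC E W)) = ls (S4 A B E W) (T4 A B E W)
      (\<lambda>b. add (L4 a A B E W (hP b (m - b) A B (toC E W))) (ng (L4 a A B E W (hQ b (m - b) A B (toC E W))))) (Suc m)"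
    unfolding Hh_def by (rule addmap_pn[OF L4_add[OF o]]) (use o in simp_all)
  have e5: "L5 a A B E W (Hh m A B E) = ls (S4 A B E W) (T4 A B E W)
      (\<lambda>b. add (L5 a A B E W (hP b (m - b) A B E)) (ng (L5 a A B E W (hQ b (m - b) A B E)))) (Suc m)"
    unfolding Hh_def by (rule addmap_pn[OF L5_add[OF o]]) (use o in simp_all)
  show ?thesis unfolding delta3_L e1 e2 e3 e4 e5 Wt_def
    using o by (simp add: lsum_add lsum_ng lsum_hom del: lsum.simps)
qed


lemma bianchi: "A \<in> ObC \<Longrightarrow> B \<in> ObC \<Longrightarrow> E \<in> ObC \<Longrightarrow> W \<in> ObC \<Longrightarrow>
  ls (S4 A B E W) (T4 A B E W) (\<lambda>a. delta3 C D FO FM (G a) (Hh (N - a)) A B E W) (Suc N) = zr (S4 A B E W) (T4 A B E W)"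
proof -
  assume o: "A \<in> ObC" "B \<in> ObC" "E \<in> ObC" "W \<in> ObC"
  let ?S = "S4 A B E W" and ?T = "T4 A B E W"
  have ob: "?S \<in> Ob" "?T \<in> Ob" using o by simp_all
  have "ls ?S ?T (\<lambda>a. delta3 C D FO FM (G a) (Hh (N - a)) A B E W) (Suc N)
     = ls ?S ?T (\<lambda>a. ls ?S ?T (\<lambda>b. Wt A B E W a b (N - a - b)) (Suc (N - a))) (Suc N)"
    by (rule lsum_cong) (simp add: delta3_Hh[OF o])
  also have "\<dots> = cube ?S ?T N (Wt A B E W)"
    by (rule cube_tri[symmetric]) (use o in simp_all)
  also have "\<dots> = add (add (add (add
   (add (cube ?S ?T N (\<lambda>a b c. L1 a A B E W (hP b c B E W))) (ng (cube ?S ?T N (\<lambda>a b c. L1 a A B E W (hQ b c B E W)))))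
   (ng (add (cube ?S ?T N (\<lambda>a b c. L2 a A B E W (hP b c (toC A B) E W))) (ng (cube ?S ?T N (\<lambda>a b c. L2 a A B E W (hQ b c (toC A B) E W)))))))
   (add (cube ?S ?T N (\<lambda>a b c. L3 a A B E W (hP b c A (toC B E) W))) (ng (cube ?S ?T N (\<lambda>a b c. L3 a A B E W (hQ b c A (toC B E) W))))))
   (ng (add (cube ?S ?T N (\<lambda>a b c. L4 a A B E W (hP b c A B (toC E W)))) (ng (cube ?S ?T N (\<lambda>a b c. L4 a A B E W (hQ b c A B (toC E W))))))))
   (add (cube ?S ?T N (\<lambda>a b c. L5 a A B E W (hP b c A B E))) (ng (cube ?S ?T N (\<lambda>a b c. L5 a A B E W (hQ b c A B E)))))"
    unfolding Wt_def[abs_def] using o by (simp add: cube_add cube_ng cube_hom)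
  also have "cube ?S ?T N (\<lambda>a b c. L1 a A B E W (hP b c B E W)) = cube ?S ?T N (\<lambda>a b c. L3 a A B E W (hQ b c A (toC B E) W))"
  proof -
    have "cube ?S ?T N (\<lambda>a b c. L1 a A B E W (hP b c B E W)) = cube ?S ?T N (\<lambda>a b c. L3 b A B E W (hQ c a A (toC B E) W))"
      using id1[OF o] by simp
    also have "\<dots> = cube ?S ?T N (\<lambda>a b c. L3 a A B E W (hQ b c A (toC B E) W))"
      by (rule cube_rot) (use o in simp_all)
    finally show ?thesis .
  qed
  also have "cube ?S ?T N (\<lambda>a b c. L2 a A B E W (hQ b c (toC A B) E W)) = cube ?S ?T N (\<lambda>a b c. L4 a A B E W (hP b c A B (toC E W)))"
  proof -
    have "cube ?S ?T N (\<lambda>a b c. L2 a A B E W (hQ b c (toC A B) E W)) = cube ?S ?T N (\<lambda>a b c. L4 b A B E W (hP a c A B (toC E W)))"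
      using id2[OF o] by simp
    also have "\<dots> = cube ?S ?T N (\<lambda>a b c. L4 a A B E W (hP b c A B (toC E W)))"
      by (rule cube_swap) (use o in simp_all)
    finally show ?thesis .
  qed
  also have "cube ?S ?T N (\<lambda>a b c. L3 a A B E W (hP b c A (toC B E) W)) = cube ?S ?T N (\<lambda>a b c. L5 a A B E W (hQ b c A B E))"
  proof -
    have "cube ?S ?T N (\<lambda>a b c. L3 a A B E W (hP b c A (toC B E) W)) = cube ?S ?T N (\<lambda>a b c. L5 c A B E W (hQ a b A B E))"
      using id3[OF o] by simp
    also have "\<dots> = cube ?S ?T N (\<lambda>a b c. L5 a A B E W (hQ b c A B E))"
      by (rule cube_rot[of _ _ "\<lambda>a b c. L5 c A B E W (hQ a b A B E)", symmetric]) (use o in simp_all)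
    finally show ?thesis .
  qed
  also have "cube ?S ?T N (\<lambda>a b c. L5 a A B E W (hP b c A B E)) = cube ?S ?T N (\<lambda>a b c. L2 a A B E W (hP b c (toC A B) E W))"
  proof -
    have "cube ?S ?T N (\<lambda>a b c. L5 a A B E W (hP b c A B E)) = cube ?S ?T N (\<lambda>a b c. L2 b A B E W (hP c a (toC A B) E W))"
      using id4[OF o] by simp
    also have "\<dots> = cube ?S ?T N (\<lambda>a b c. L2 a A B E W (hP b c (toC A B) E W))"
      by (rule cube_rot) (use o in simp_all)
    finally show ?thesis .
  qed
  also have "cube ?S ?T N (\<lambda>a b c. L1 a A B E W (hQ b c B E W)) = cube ?S ?T N (\<lambda>a b c. L4 a A B E W (hQ b c A B (toC E W)))"
  proof -
    have "cube ?S ?T N (\<lambda>a b c. L1 a A B E W (hQ b c B E W)) = cube ?S ?T N (\<lambda>a b c. L4 b A B E W (hQ c a A B (toC E W)))"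
      using id5[OF o] by simp
    also have "\<dots> = cube ?S ?T N (\<lambda>a b c. L4 a A B E W (hQ b c A B (toC E W)))"
      by (rule cube_rot) (use o in simp_all)
    finally show ?thesis .
  qed
  also have "add (add (add (add
   (add (cube ?S ?T N (\<lambda>a b c. L3 a A B E W (hQ b c A (toC B E) W))) (ng (cube ?S ?T N (\<lambda>a b c. L4 a A B E W (hQ b c A B (toC E W))))))
   (ng (add (cube ?S ?T N (\<lambda>a b c. L2 a A B E W (hP b c (toC A B) E W))) (ng (cube ?S ?T N (\<lambda>a b c. L4 a A B E W (hP b c A B (toC E W))))))))
   (add (cube ?S ?T N (\<lambda>a b c. L5 a A B E W (hQ b c A B E))) (ng (cube ?S ?T N (\<lambda>a b c. L3 a A B E W (hQ b c A (toC B E) W))))))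
   (ng (add (cube ?S ?T N (\<lambda>a b c. L4 a A B E W (hP b c A B (toC E W)))) (ng (cube ?S ?T N (\<lambda>a b c. L4 a A B E W (hQ b c A B (toC E W))))))))
   (add (cube ?S ?T N (\<lambda>a b c. L2 a A B E W (hP b c (toC A B) E W))) (ng (cube ?S ?T N (\<lambda>a b c. L5 a A B E W (hQ b c A B E)))))
   = zr ?S ?T"
    by (rule grp5) (use o in \<open>simp_all add: cube_hom\<close>)
  finally show ?thesis .
qed

end


context Main begin

lemma G0_fun: "G 0 = Ft" by (rule ext)+ simp

lemma Gbig_s[simp]: "n < k \<Longrightarrow> G k X Y = zr (FO (toC X Y)) (to (FO X) (FO Y))" by (rule Gbig)

lemma G_unitL[simp]: "1 \<le> k \<Longrightarrow> k \<le> n \<Longrightarrow> X \<in> ObC \<Longrightarrow> G k IC X = zr (FO (toC IC X)) (to (FO IC) (FO X))"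
  by (simp add: Gk Fk_lunit)
lemma G_unitR[simp]: "1 \<le> k \<Longrightarrow> k \<le> n \<Longrightarrow> X \<in> ObC \<Longrightarrow> G k X IC = zr (FO (toC X IC)) (to (FO X) (FO IC))"
  by (simp add: Gk Fk_runit)

lemma arr_Ft[simp]: "X \<in> ObC \<Longrightarrow> Y \<in> ObC \<Longrightarrow> Ft X Y \<in> arr" by (rule hom_arr[OF Ft_hom])
lemma dom_Ft[simp]: "X \<in> ObC \<Longrightarrow> Y \<in> ObC \<Longrightarrow> dm (Ft X Y) = FO (toC X Y)" by (rule hom_dom[OF Ft_hom])
lemma cod_Ft[simp]: "X \<in> ObC \<Longrightarrow> Y \<in> ObC \<Longrightarrow> cd (Ft X Y) = to (FO X) (FO Y)" by (rule hom_cod[OF Ft_hom])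

lemma hP_edge: "X \<in> ObC \<Longrightarrow> Y \<in> ObC \<Longrightarrow> Z \<in> ObC \<Longrightarrow>
  hP 0 (Suc n) X Y Z = zr (FO (toC (toC X Y) Z)) (to (FO X) (to (FO Y) (FO Z))) \<and>
  hP (Suc n) 0 X Y Z = zr (FO (toC (toC X Y) Z)) (to (FO X) (to (FO Y) (FO Z))) \<and>
  hQ 0 (Suc n) X Y Z = zr (FO (toC (toC X Y) Z)) (to (FO X) (to (FO Y) (FO Z))) \<and>
  hQ (Suc n) 0 X Y Z = zr (FO (toC (toC X Y) Z)) (to (FO X) (to (FO Y) (FO Z)))"
  unfolding hP_def hQ_def by simp

lemma hPQ_unit: "1 \<le> b \<Longrightarrow> b \<le> n \<Longrightarrow> 1 \<le> c \<Longrightarrow> c \<le> n \<Longrightarrow> X \<in> ObC \<Longrightarrow> Y \<in> ObC \<Longrightarrow> Z \<in> ObC \<Longrightarrow>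
  X = IC \<or> Y = IC \<or> Z = IC \<Longrightarrow>
  hP b c X Y Z = zr (FO (toC (toC X Y) Z)) (to (FO X) (to (FO Y) (FO Z))) \<and>
  hQ b c X Y Z = zr (FO (toC (toC X Y) Z)) (to (FO X) (to (FO Y) (FO Z)))"
  unfolding hP_def hQ_def by (elim disjE) simp_all

lemma split_P: "X \<in> ObC \<Longrightarrow> Y \<in> ObC \<Longrightarrow> Z \<in> ObC \<Longrightarrow>
  ls (FO (toC (toC X Y) Z)) (to (FO X) (to (FO Y) (FO Z))) (\<lambda>b. h b (Suc n - b)) (Suc (Suc n))
  = ls (FO (toC (toC X Y) Z)) (to (FO X) (to (FO Y) (FO Z))) (\<lambda>i. h (n - i) (Suc i)) n"
  if hh: "\<And>b c. h b c \<in> H (FO (toC (toC X Y) Z)) (to (FO X) (to (FO Y) (FO Z)))"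
   and h0: "h 0 (Suc n) = zr (FO (toC (toC X Y) Z)) (to (FO X) (to (FO Y) (FO Z)))"
   and h1: "h (Suc n) 0 = zr (FO (toC (toC X Y) Z)) (to (FO X) (to (FO Y) (FO Z)))"
  for h
proof -
  assume o: "X \<in> ObC" "Y \<in> ObC" "Z \<in> ObC"
  let ?S = "FO (toC (toC X Y) Z)" and ?T = "to (FO X) (to (FO Y) (FO Z))"
  have "ls ?S ?T (\<lambda>b. h b (Suc n - b)) (Suc (Suc n)) = add (ls ?S ?T (\<lambda>b. h b (Suc n - b)) (Suc n)) (h (Suc n) (Suc n - Suc n))"
    by (simp only: lsum.simps(2))
  also have "\<dots> = ls ?S ?T (\<lambda>b. h b (Suc n - b)) (Suc n)" using h1 hh o by (simp add: lsum_hom del: lsum.simps)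
  also have "\<dots> = add ((\<lambda>b. h b (Suc n - b)) 0) (ls ?S ?T (\<lambda>i. (\<lambda>b. h b (Suc n - b)) (Suc i)) n)"
    by (rule lsum_shift) (use o hh in simp_all)
  also have "\<dots> = ls ?S ?T (\<lambda>i. h (Suc i) (n - i)) n" using h0 hh o by (simp add: lsum_hom del: lsum.simps)
  also have "\<dots> = ls ?S ?T (\<lambda>i. h (Suc (n - Suc i)) (n - (n - Suc i))) n"
    by (rule lsum_rev[where f="\<lambda>j. h (Suc j) (n - j)", symmetric]) (use o hh in simp_all)
  also have "\<dots> = ls ?S ?T (\<lambda>i. h (n - i) (Suc i)) n"
    by (rule lsum_cong) (simp add: Suc_diff_Suc)
  finally show ?thesis .
qed

lemma obs_eq[simp]: "X \<in> ObC \<Longrightarrow> Y \<in> ObC \<Longrightarrow> Z \<in> ObC \<Longrightarrow> obstruction C D FO FM n Fk X Y Z = Hh (Suc n) X Y Z"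
proof -
  assume o: "X \<in> ObC" "Y \<in> ObC" "Z \<in> ObC"
  let ?S = "FO (toC (toC X Y) Z)" and ?T = "to (FO X) (to (FO Y) (FO Z))"
  have "Hh (Suc n) X Y Z = add (ls ?S ?T (\<lambda>b. hP b (Suc n - b) X Y Z) (Suc (Suc n)))
      (ng (ls ?S ?T (\<lambda>b. hQ b (Suc n - b) X Y Z) (Suc (Suc n))))"
    unfolding Hh_def using o by (simp add: lsum_add lsum_ng del: lsum.simps)
  also have "ls ?S ?T (\<lambda>b. hP b (Suc n - b) X Y Z) (Suc (Suc n)) = ls ?S ?T (\<lambda>i. hP (n - i) (Suc i) X Y Z) n"
    by (rule split_P) (use o hP_edge[OF o] in simp_all)
  also have "ls ?S ?T (\<lambda>b. hQ b (Suc n - b) X Y Z) (Suc (Suc n)) = ls ?S ?T (\<lambda>i. hQ (n - i) (Suc i) X Y Z) n"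
    by (rule split_P) (use o hP_edge[OF o] in simp_all)
  also have "ls ?S ?T (\<lambda>i. hP (n - i) (Suc i) X Y Z) n = ls ?S ?T (\<lambda>i. let l = i + 1; m = n - i in
            cmp (al (FO X) (FO Y) (FO Z)) (cmp (tm (Fk m X Y) (idd (FO Z))) (Fk l (toC X Y) Z))) n"
    by (rule lsum_cong) (simp add: hP_def Gk Let_def)
  also have "ls ?S ?T (\<lambda>i. hQ (n - i) (Suc i) X Y Z) n = ls ?S ?T (\<lambda>i. let p = i + 1; q = n - i in
            cmp (tm (idd (FO X)) (Fk q Y Z)) (cmp (Fk p X (toC Y Z)) (FM (alC X Y Z)))) n"
    by (rule lsum_cong) (simp add: hQ_def Gk Let_def)
  finally have eq: "Hh (Suc n) X Y Z = add (ls ?S ?T (\<lambda>i. let l = i + 1; m = n - i in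
            cmp (al (FO X) (FO Y) (FO Z)) (cmp (tm (Fk m X Y) (idd (FO Z))) (Fk l (toC X Y) Z))) n)
      (ng (ls ?S ?T (\<lambda>i. let p = i + 1; q = n - i in
            cmp (tm (idd (FO X)) (Fk q Y Z)) (cmp (Fk p X (toC Y Z)) (FM (alC X Y Z)))) n))" .
  show ?thesis by (simp only: obstruction_def Let_def eq)
qed

lemma delta3_Hzero: "A \<in> ObC \<Longrightarrow> B \<in> ObC \<Longrightarrow> E \<in> ObC \<Longrightarrow> W \<in> ObC \<Longrightarrow> m \<le> n \<Longrightarrow>
  delta3 C D FO FM (G a) (Hh m) A B E W = zr (S4 A B E W) (T4 A B E W)"
proof -
  assume o: "A \<in> ObC" "B \<in> ObC" "E \<in> ObC" "W \<in> ObC" and m: "m \<le> n"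
  show ?thesis unfolding delta3_L using o m
    by (simp add: Hh_zero addmap_zr[OF L1_add[OF o]] addmap_zr[OF L2_add[OF o]] addmap_zr[OF L3_add[OF o]]
          addmap_zr[OF L4_add[OF o]] addmap_zr[OF L5_add[OF o]])
qed

lemma delta3_hom: "A \<in> ObC \<Longrightarrow> B \<in> ObC \<Longrightarrow> E \<in> ObC \<Longrightarrow> W \<in> ObC \<Longrightarrow>
  delta3 C D FO FM (G a) (Hh m) A B E W \<in> H (S4 A B E W) (T4 A B E W)"
  by (simp add: delta3_Hh lsum_hom del: lsum.simps)

lemma cocycle: "A \<in> ObC \<Longrightarrow> B \<in> ObC \<Longrightarrow> E \<in> ObC \<Longrightarrow> W \<in> ObC \<Longrightarrow>
  delta3 C D FO FM Ft (obstruction C D FO FM n Fk) A B E W = zr (S4 A B E W) (T4 A B E W)"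
proof -
  assume o: "A \<in> ObC" "B \<in> ObC" "E \<in> ObC" "W \<in> ObC"
  let ?S = "S4 A B E W" and ?T = "T4 A B E W"
  have e: "delta3 C D FO FM Ft (obstruction C D FO FM n Fk) A B E W = delta3 C D FO FM (G 0) (Hh (Suc n)) A B E W"
    unfolding G0_fun delta3_def Let_def
      obs_eq[OF o(2) o(3) o(4)] obs_eq[OF toC_ob[OF o(1) o(2)] o(3) o(4)] obs_eq[OF o(1) toC_ob[OF o(2) o(3)] o(4)]
      obs_eq[OF o(1) o(2) toC_ob[OF o(3) o(4)]] obs_eq[OF o(1) o(2) o(3)] ..
  have "zr ?S ?T = ls ?S ?T (\<lambda>a. delta3 C D FO FM (G a) (Hh (Suc n - a)) A B E W) (Suc (Suc n))"
    by (rule bianchi[OF o, symmetric])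
  also have "\<dots> = add (delta3 C D FO FM (G 0) (Hh (Suc n)) A B E W)
     (ls ?S ?T (\<lambda>i. delta3 C D FO FM (G (Suc i)) (Hh (Suc n - Suc i)) A B E W) (Suc n))"
    by (subst lsum_shift) (use o delta3_hom[OF o] in simp_all)
  also have "ls ?S ?T (\<lambda>i. delta3 C D FO FM (G (Suc i)) (Hh (Suc n - Suc i)) A B E W) (Suc n) = zr ?S ?T"
    by (rule lsum_zero) (use o delta3_Hzero[OF o] in simp_all)
  finally have z: "zr ?S ?T = add (delta3 C D FO FM (G 0) (Hh (Suc n)) A B E W) (zr ?S ?T)" .
  have "delta3 C D FO FM (G 0) (Hh (Suc n)) A B E W = zr ?S ?T"
    using z add_zero[OF delta3_hom[OF o, of 0 "Suc n"]] by metis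
  then show ?thesis using e by (simp only:)
qed

lemma FMal_nat_t: "f \<in> HC X X' \<Longrightarrow> g \<in> HC Y Y' \<Longrightarrow> h \<in> HC Z Z' \<Longrightarrow>
   cmp (FM (alC X' Y' Z')) (FM (tmC (tmC f g) h)) = cmp (FM (tmC f (tmC g h))) (FM (alC X Y Z))"
proof -
  assume a: "f \<in> HC X X'" "g \<in> HC Y Y'" "h \<in> HC Z Z'"
  have o: "X \<in> ObC" "Y \<in> ObC" "Z \<in> ObC" "X' \<in> ObC" "Y' \<in> ObC" "Z' \<in> ObC" using a homC_objs by blast+
  have "cmp (FM (alC X' Y' Z')) (FM (tmC (tmC f g) h)) = FM (cmpC (alC X' Y' Z') (tmC (tmC f g) h))"
    by (rule FM_comp[symmetric]) (use a o in auto)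
  also have "\<dots> = FM (cmpC (tmC f (tmC g h)) (alC X Y Z))" using alC_nat[OF a] by simp
  also have "\<dots> = cmp (FM (tmC f (tmC g h))) (FM (alC X Y Z))"
    by (rule FM_comp) (use a o in auto)
  finally show ?thesis .
qed

lemma hP_nat: "f \<in> HC X X' \<Longrightarrow> g \<in> HC Y Y' \<Longrightarrow> h \<in> HC Z Z' \<Longrightarrow>
  cmp (hP b c X' Y' Z') (FM (tmC (tmC f g) h)) = cmp (tm (FM f) (tm (FM g) (FM h))) (hP b c X Y Z)"
proof -
  assume a: "f \<in> HC X X'" "g \<in> HC Y Y'" "h \<in> HC Z Z'"
  have o: "X \<in> ObC" "Y \<in> ObC" "Z \<in> ObC" "X' \<in> ObC" "Y' \<in> ObC" "Z' \<in> ObC" using a homC_objs by blast+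
  have r: "f \<in> arrC" "g \<in> arrC" "h \<in> arrC" "cDom C f = X" "cDom C g = Y" "cDom C h = Z"
    "cCod C f = X'" "cCod C g = Y'" "cCod C h = Z'"
    using a by (auto simp: homC_arr homC_dom homC_cod)
  show ?thesis unfolding hP_def using o r by (simp add: norm G_nat_a G_nat_t al_nat_s)
qed

lemma hQ_nat: "f \<in> HC X X' \<Longrightarrow> g \<in> HC Y Y' \<Longrightarrow> h \<in> HC Z Z' \<Longrightarrow>
  cmp (hQ b c X' Y' Z') (FM (tmC (tmC f g) h)) = cmp (tm (FM f) (tm (FM g) (FM h))) (hQ b c X Y Z)"
proof -
  assume a: "f \<in> HC X X'" "g \<in> HC Y Y'" "h \<in> HC Z Z'"
  have o: "X \<in> ObC" "Y \<in> ObC" "Z \<in> ObC" "X' \<in> ObC" "Y' \<in> ObC" "Z' \<in> ObC" using a homC_objs by blast+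
  have r: "f \<in> arrC" "g \<in> arrC" "h \<in> arrC" "cDom C f = X" "cDom C g = Y" "cDom C h = Z"
    "cCod C f = X'" "cCod C g = Y'" "cCod C h = Z'"
    using a by (auto simp: homC_arr homC_dom homC_cod)
  have "cmp (hQ b c X' Y' Z') (FM (tmC (tmC f g) h)) =
     cmp (tm (idd (FO X')) (G b Y' Z')) (cmp (G c X' (toC Y' Z')) (cmp (FM (alC X' Y' Z')) (FM (tmC (tmC f g) h))))"
    unfolding hQ_def using o r by (simp add: norm)
  also have "\<dots> = cmp (tm (idd (FO X')) (G b Y' Z')) (cmp (G c X' (toC Y' Z')) (cmp (FM (tmC f (tmC g h))) (FM (alC X Y Z))))"
    using FMal_nat_t[OF a] by simp
  also have "\<dots> = cmp (tm (FM f) (tm (FM g) (FM h))) (hQ b c X Y Z)"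
    unfolding hQ_def using o r by (simp add: norm G_nat_a G_nat_t)
  finally show ?thesis .
qed

lemma Hh_nat: "f \<in> HC X X' \<Longrightarrow> g \<in> HC Y Y' \<Longrightarrow> h \<in> HC Z Z' \<Longrightarrow>
  cmp (Hh m X' Y' Z') (FM (tmC (tmC f g) h)) = cmp (tm (FM f) (tm (FM g) (FM h))) (Hh m X Y Z)"
proof -
  assume a: "f \<in> HC X X'" "g \<in> HC Y Y'" "h \<in> HC Z Z'"
  have o: "X \<in> ObC" "Y \<in> ObC" "Z \<in> ObC" "X' \<in> ObC" "Y' \<in> ObC" "Z' \<in> ObC" using a homC_objs by blast+
  have u: "FM (tmC (tmC f g) h) \<in> H (FO (toC (toC X Y) Z)) (FO (toC (toC X' Y') Z'))" using a by blast
  have v: "tm (FM f) (tm (FM g) (FM h)) \<in> H (to (FO X) (to (FO Y) (FO Z))) (to (FO X') (to (FO Y') (FO Z')))"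
    using a by blast
  have "cmp (Hh m X' Y' Z') (FM (tmC (tmC f g) h)) = ls (FO (toC (toC X Y) Z)) (to (FO X') (to (FO Y') (FO Z')))
    (\<lambda>b. add (cmp (hP b (m - b) X' Y' Z') (FM (tmC (tmC f g) h))) (ng (cmp (hQ b (m - b) X' Y' Z') (FM (tmC (tmC f g) h))))) (Suc m)"
    unfolding Hh_def by (rule addmap_pn[OF addmap_cmpR[OF u]]) (use o in simp_all)
  also have "\<dots> = ls (FO (toC (toC X Y) Z)) (to (FO X') (to (FO Y') (FO Z')))
    (\<lambda>b. add (cmp (tm (FM f) (tm (FM g) (FM h))) (hP b (m - b) X Y Z)) (ng (cmp (tm (FM f) (tm (FM g) (FM h))) (hQ b (m - b) X Y Z)))) (Suc m)"
    by (rule lsum_cong) (simp add: hP_nat[OF a] hQ_nat[OF a])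
  also have "\<dots> = cmp (tm (FM f) (tm (FM g) (FM h))) (Hh m X Y Z)"
    unfolding Hh_def by (rule addmap_pn[OF addmap_cmpL[OF v], symmetric]) (use o in simp_all)
  finally show ?thesis .
qed

lemma Hh_unit: "X \<in> ObC \<Longrightarrow> Y \<in> ObC \<Longrightarrow> Z \<in> ObC \<Longrightarrow> X = IC \<or> Y = IC \<or> Z = IC \<Longrightarrow>
  Hh (Suc n) X Y Z = zr (FO (toC (toC X Y) Z)) (to (FO X) (to (FO Y) (FO Z)))"
proof -
  assume o: "X \<in> ObC" "Y \<in> ObC" "Z \<in> ObC" and u: "X = IC \<or> Y = IC \<or> Z = IC"
  show ?thesis unfolding Hh_def
  proof (rule lsum_zero)
    fix b assume b: "b < Suc (Suc n)"
    show "add (hP b (Suc n - b) X Y Z) (ng (hQ b (Suc n - b) X Y Z)) = zr (FO (toC (toC X Y) Z)) (to (FO X) (to (FO Y) (FO Z)))"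
    proof (cases "b = 0 \<or> b = Suc n")
      case True then show ?thesis using hP_edge[OF o] o by auto
    next
      case False
      then have "1 \<le> b" "b \<le> n" "1 \<le> Suc n - b" "Suc n - b \<le> n" using b by auto
      then show ?thesis using hPQ_unit[OF _ _ _ _ o u] o by simp
    qed
  qed (use o in simp_all)
qed

lemma part2: "is_3cocycle C D FO FM Ft (obstruction C D FO FM n Fk)"
  unfolding is_3cocycle_def inC3_def inX3_def
proof (intro conjI ballI impI allI)
  fix A B E assume o: "A \<in> ObC" "B \<in> ObC" "E \<in> ObC"
  show "obstruction C D FO FM n Fk A B E \<in> H (FO (toC (toC A B) E)) (to (FO A) (to (FO B) (FO E)))"
    using o Hh_hom by simp
next
  fix f g h assume a: "f \<in> arrC" "g \<in> arrC" "h \<in> arrC"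
  show "cmp (obstruction C D FO FM n Fk (cCod C f) (cCod C g) (cCod C h)) (FM (tmC (tmC f g) h)) =
        cmp (tm (FM f) (tm (FM g) (FM h))) (obstruction C D FO FM n Fk (cDom C f) (cDom C g) (cDom C h))"
    using a Hh_nat[OF arrC_hom arrC_hom arrC_hom] by simp
next
  fix A B E assume o: "A \<in> ObC" "B \<in> ObC" "E \<in> ObC" and u: "A = IC \<or> B = IC \<or> E = IC"
  show "obstruction C D FO FM n Fk A B E = zr (FO (toC (toC A B) E)) (to (FO A) (to (FO B) (FO E)))"
    using Hh_unit[OF o u] o by simp
next
  fix A B E W assume o: "A \<in> ObC" "B \<in> ObC" "E \<in> ObC" "W \<in> ObC"
  show "delta3 C D FO FM Ft (obstruction C D FO FM n Fk) A B E W = zr (S4 A B E W) (T4 A B E W)"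
    by (rule cocycle[OF o])
qed

end

theorem proposition3p6:
  fixes C :: "('o1, 'm1, 'z1) moncat_scheme"
    and D :: "('k::field, 'o2, 'm2, 'z2) linmoncat_scheme"
    and FO :: "'o1 \<Rightarrow> 'o2" and FM :: "'m1 \<Rightarrow> 'm2"
    and Ft :: "'o1 \<Rightarrow> 'o1 \<Rightarrow> 'm2" and F0 :: "'m2"
    and n :: nat and Fk :: "nat \<Rightarrow> 'o1 \<Rightarrow> 'o1 \<Rightarrow> 'm2"
  assumes "is_moncat C"
    and "is_linmoncat D"
    and "is_monfun C D FO FM Ft F0"
    and "is_proper_deformation C D FO FM Ft F0 n Fk"
  shows "(\<forall>k\<in>{1..n}. inC2 C D FO FM (Fk k)) \<and>
         is_3cocycle C D FO FM Ft (obstruction C D FO FM n Fk)"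
proof -
  interpret M: Main D C FO FM Ft F0 n Fk
    by unfold_locales (use assms in auto)
  show ?thesis using M.part1 M.part2 by blast
qed

end
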